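(* Assume $\lim_{t\to\infty}g(t)=\infty$ and $\lim_{t\to\infty}g'(t)/g(t)^2=0$. Then $Y$ is bounded in $L^2$, i.e. $\sup_{t\ge0}\mathbb{E}|Y_t|^2<\infty$.
   Context: Let $d\ge1$ and $B$ a standard $d$-dimensional Brownian motion. The potential $V:\mathbb{R}^d\to[0,\infty)$ is $C^2$ and $V=W+\chi$, where $\chi$ is compactly supported with $\nabla\chi$ Lipschitz and there is $c>0$ with $\nabla^2W(x)\ge c\,\mathrm{Id}$ for all $x$; moreover there is $a>0$ with $\Delta V(x)\le a(1+V(x))$ for all $x$ and $|\nabla V(x)|^2/V(x)\to\infty$ as $|x|\to\infty$. $V$ has finitely many critical points; its local minima have positive definite Hessian, and at each other critical point $\nabla^2V$ has a negative eigenvalue. The function $g:[0,\infty)\to(0,\infty)$ is $C^1$ and non-decreasing. Fix $x\in\mathbb{R}^d$, $r>0$, a probability measure $\mu$ with mean $\bar\mu$. $Y$ is the solution of $\mathrm{d}Y_t=\mathrm{d}B_t-g(t)\nabla V(Y_t)\mathrm{d}t-\frac{Y_t}{r+t}\mathrm{d}t$, $Y_0=x-\bar\mu$. *)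

theory Defs
  imports "HOL-Probability.Probability"
begin

definition gaussian_iso :: "real \<Rightarrow> 'd::euclidean_space measure" where
  "gaussian_iso v = density lborel
     (\<lambda>y::'d. ennreal ((2 * pi * v) powr (- real DIM('d) / 2) * exp (- (norm y)\<^sup>2 / (2 * v))))"

definition std_brownian_motion :: "'a measure \<Rightarrow> (real \<Rightarrow> 'a \<Rightarrow> 'd::euclidean_space) \<Rightarrow> bool" where
  "std_brownian_motion M B \<longleftrightarrow>
     prob_space M \<and>
     (\<forall>t\<ge>0. B t \<in> borel_measurable M) \<and>
     (AE \<omega> in M. B 0 \<omega> = 0 \<and> continuous_on {0..} (\<lambda>t. B t \<omega>)) \<and>
     (\<forall>(ts::nat \<Rightarrow> real) n. 0 \<le> ts 0 \<and> (\<forall>k<n. ts k < ts (Suc k)) \<longrightarrow>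
        prob_space.indep_vars M (\<lambda>_. borel) (\<lambda>k \<omega>. B (ts (Suc k)) \<omega> - B (ts k) \<omega>) {..<n}) \<and>
     (\<forall>s t. 0 \<le> s \<and> s < t \<longrightarrow> distr M borel (\<lambda>\<omega>. B t \<omega> - B s \<omega>) = gaussian_iso (t - s))"

definition laplacian_of :: "('d::euclidean_space \<Rightarrow>\<^sub>L 'd) \<Rightarrow> real" where
  "laplacian_of H = (\<Sum>b\<in>Basis. b \<bullet> blinfun_apply H b)"

definition is_local_min :: "('d::euclidean_space \<Rightarrow> real) \<Rightarrow> 'd \<Rightarrow> bool" where
  "is_local_min f x \<longleftrightarrow> (\<exists>e>0. \<forall>y\<in>ball x e. f x \<le> f y)"

end

theory Submission
  imports Defs
begin


lemma cosh_comparison: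
  fixes f f1 f2 :: "real \<Rightarrow> real" and k :: real
  assumes k: "k > 0"
    and d1: "\<And>s. (f has_real_derivative f1 s) (at s)"
    and d2: "\<And>s. (f1 has_real_derivative f2 s) (at s)"
    and ineq: "\<And>s. s \<ge> 0 \<Longrightarrow> f2 s \<le> k\<^sup>2 * f s"
    and s: "s \<ge> 0"
  shows "f s \<le> f 0 * cosh (k * s) + f1 0 * sinh (k * s) / k"
proof -
  define q where "q t = f1 t * cosh (k * t) - k * f t * sinh (k * t)" for t
  have dq: "(q has_real_derivative (f2 t - k\<^sup>2 * f t) * cosh (k * t)) (at t)" for t
    unfolding q_def
    by (auto intro!: derivative_eq_intros d1 d2 simp: power2_eq_square algebra_simps)
  have qle: "q t \<le> f1 0" if "t \<ge> 0" for t
  proof -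
    have "q t \<le> q 0"
      apply (rule DERIV_nonpos_imp_nonincreasing[OF that])
      using dq ineq by (intro exI conjI, blast, simp add: mult_nonpos_nonneg)
    thus ?thesis by (simp add: q_def)
  qed
  have cpos: "cosh (k * t) > 0" for t by simp
  have dth: "((\<lambda>t. sinh (k * t) / cosh (k * t)) has_real_derivative k / (cosh (k * t))\<^sup>2) (at t)" for t
  proof -
    have "((\<lambda>t. sinh (k * t) / cosh (k * t)) has_real_derivative
        (cosh (k * t) * k * cosh (k * t) - sinh (k * t) * (sinh (k * t) * k)) / (cosh (k * t) * cosh (k * t))) (at t)"
      by (rule derivative_eq_intros refl | simp)+
    moreover have "(cosh (k * t) * k * cosh (k * t) - sinh (k * t) * (sinh (k * t) * k)) / (cosh (k * t) * cosh (k * t))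
        = k / (cosh (k * t))\<^sup>2"
      using cosh_square_eq[of "k * t"] by (simp add: power2_eq_square algebra_simps)
    ultimately show ?thesis by simp
  qed
  have dfc: "((\<lambda>t. f t / cosh (k * t)) has_real_derivative
        (f1 t * cosh (k * t) - f t * (sinh (k * t) * k)) / (cosh (k * t) * cosh (k * t))) (at t)" for t
    by (rule derivative_eq_intros refl d1 | simp)+
  define p where "p t = f t / cosh (k * t) - f1 0 / k * (sinh (k * t) / cosh (k * t))" for t
  have dp: "(p has_real_derivative (q t - f1 0) / (cosh (k * t))\<^sup>2) (at t)" for t
  proof -
    have "(p has_real_derivative (f1 t * cosh (k * t) - f t * (sinh (k * t) * k)) / (cosh (k * t) * cosh (k * t))
        - f1 0 / k * (k / (cosh (k * t))\<^sup>2)) (at t)"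
      unfolding p_def by (intro DERIV_diff DERIV_cmult dfc dth)
    moreover have "(f1 t * cosh (k * t) - f t * (sinh (k * t) * k)) / (cosh (k * t) * cosh (k * t))
        - f1 0 / k * (k / (cosh (k * t))\<^sup>2) = (q t - f1 0) / (cosh (k * t))\<^sup>2"
      using k by (simp add: q_def power2_eq_square field_simps)
    ultimately show ?thesis by simp
  qed
  have "p s \<le> p 0"
    apply (rule DERIV_nonpos_imp_nonincreasing[OF s])
    using dp qle by (intro exI conjI, blast, simp add: divide_nonpos_pos)
  hence "f s / cosh (k * s) \<le> f 0 + f1 0 / k * (sinh (k * s) / cosh (k * s))" by (simp add: p_def)
  hence "f s \<le> cosh (k * s) * (f 0 + f1 0 / k * (sinh (k * s) / cosh (k * s)))"
    using cpos[of s] by (simp add: divide_le_eq mult.commute)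
  thus ?thesis using cpos[of s] by (simp add: field_simps)
qed


lemma ray_derivs:
  fixes V :: "'d::euclidean_space \<Rightarrow> real" and DV :: "'d \<Rightarrow> 'd" and D2V :: "'d \<Rightarrow> ('d \<Rightarrow>\<^sub>L 'd)"
  assumes V_grad: "\<forall>y. (V has_derivative (\<lambda>h. DV y \<bullet> h)) (at y)"
    and V_hess: "\<forall>y. (DV has_derivative blinfun_apply (D2V y)) (at y)"
  shows "((\<lambda>t. V (t *\<^sub>R u)) has_real_derivative (DV (t *\<^sub>R u) \<bullet> u)) (at t)"
    and "((\<lambda>t. DV (t *\<^sub>R u) \<bullet> u) has_real_derivative (blinfun_apply (D2V (t *\<^sub>R u)) u \<bullet> u)) (at t)"
proof -
  have lin: "((\<lambda>t. t *\<^sub>R u) has_derivative (\<lambda>h. h *\<^sub>R u)) (at t)"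
    by (auto intro!: derivative_eq_intros)
  have "((\<lambda>t. V (t *\<^sub>R u)) has_derivative (\<lambda>h. DV (t *\<^sub>R u) \<bullet> (h *\<^sub>R u))) (at t)"
    using has_derivative_compose[OF lin V_grad[rule_format]] by simp
  thus "((\<lambda>t. V (t *\<^sub>R u)) has_real_derivative (DV (t *\<^sub>R u) \<bullet> u)) (at t)"
    unfolding has_field_derivative_def by (rule has_derivative_eq_rhs) (simp add: fun_eq_iff mult.commute)
  have "((\<lambda>t. DV (t *\<^sub>R u)) has_derivative (\<lambda>h. blinfun_apply (D2V (t *\<^sub>R u)) (h *\<^sub>R u))) (at t)"
    using has_derivative_compose[OF lin V_hess[rule_format]] by simp
  hence "((\<lambda>t. DV (t *\<^sub>R u) \<bullet> u) has_derivative (\<lambda>h. blinfun_apply (D2V (t *\<^sub>R u)) (h *\<^sub>R u) \<bullet> u)) (at t)"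
    by (auto intro!: derivative_eq_intros)
  thus "((\<lambda>t. DV (t *\<^sub>R u) \<bullet> u) has_real_derivative (blinfun_apply (D2V (t *\<^sub>R u)) u \<bullet> u)) (at t)"
    unfolding has_field_derivative_def by (rule has_derivative_eq_rhs) (simp add: fun_eq_iff blinfun.scaleR_right mult.commute)
qed

lemma V_growth:
  fixes V :: "'d::euclidean_space \<Rightarrow> real" and DV :: "'d \<Rightarrow> 'd" and D2V :: "'d \<Rightarrow> ('d \<Rightarrow>\<^sub>L 'd)"
  assumes V_grad: "\<forall>y. (V has_derivative (\<lambda>h. DV y \<bullet> h)) (at y)"
    and V_hess: "\<forall>y. (DV has_derivative blinfun_apply (D2V y)) (at y)"
    and quad: "\<And>y u. norm u = 1 \<Longrightarrow> blinfun_apply (D2V y) u \<bullet> u \<le> \<alpha> * V y + \<beta>"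
    and alpha: "\<alpha> > 0"
  shows "V y \<le> (\<bar>V 0 + \<beta> / \<alpha>\<bar> + norm (DV 0) / sqrt \<alpha> + \<bar>\<beta> / \<alpha>\<bar>) * exp (sqrt \<alpha> * norm y)"
proof (cases "y = 0")
  case True
  have a: "norm (DV 0) / sqrt \<alpha> \<ge> 0" using alpha by simp
  have "V 0 \<le> \<bar>V 0 + \<beta> / \<alpha>\<bar> + \<bar>\<beta> / \<alpha>\<bar>" by arith
  thus ?thesis using True a by simp
next
  case False
  define u where "u = y /\<^sub>R norm y"
  have nu: "norm u = 1" using False by (simp add: u_def)
  have yu: "y = norm y *\<^sub>R u" using False by (simp add: u_def)
  define k where "k = sqrt \<alpha>"
  have k: "k > 0" "k\<^sup>2 = \<alpha>" using alpha by (auto simp: k_def)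
  define f where "f t = V (t *\<^sub>R u) + \<beta> / \<alpha>" for t
  have d1: "(f has_real_derivative (DV (t *\<^sub>R u) \<bullet> u)) (at t)" for t
    unfolding f_def using ray_derivs(1)[OF V_grad V_hess] by (auto intro!: derivative_eq_intros)
  have d2: "((\<lambda>t. DV (t *\<^sub>R u) \<bullet> u) has_real_derivative (blinfun_apply (D2V (t *\<^sub>R u)) u \<bullet> u)) (at t)" for t
    using ray_derivs(2)[OF V_grad V_hess] by blast
  have ineq: "blinfun_apply (D2V (t *\<^sub>R u)) u \<bullet> u \<le> k\<^sup>2 * f t" for t
    using quad[OF nu, of "t *\<^sub>R u"] alpha k by (simp add: f_def algebra_simps)
  have "f (norm y) \<le> f 0 * cosh (k * norm y) + (DV (0 *\<^sub>R u) \<bullet> u) * sinh (k * norm y) / k"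
    using cosh_comparison[OF k(1) d1 d2 ineq, of "norm y"] by (simp only: norm_ge_zero scaleR_zero_left simp_thms)
  also have "\<dots> \<le> \<bar>f 0\<bar> * exp (k * norm y) + norm (DV 0) / k * exp (k * norm y)"
  proof -
    define z where "z = k * norm y"
    have z: "z \<ge> 0" using k by (simp add: z_def)
    have e1: "exp (- z) \<le> 1" "1 \<le> exp z" "exp (-z) > 0" using z by auto
    have c: "cosh z \<le> exp z" unfolding cosh_def using e1 by (simp add: divide_simps)
    have sz: "sinh z = exp z / 2 - exp (- z) / 2" by (simp add: sinh_def field_simps)
    have s: "\<bar>sinh z\<bar> \<le> exp z" unfolding sz using e1 exp_gt_zero[of z] by linarith
    have cp: "cosh z \<ge> 0" by (simp add: cosh_def)
    have "f 0 * cosh z \<le> \<bar>f 0\<bar> * exp z"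
    proof -
      have "f 0 * cosh z \<le> \<bar>f 0\<bar> * cosh z" using cp by (simp add: mult_right_mono)
      also have "\<dots> \<le> \<bar>f 0\<bar> * exp z" using c by (simp add: mult_left_mono)
      finally show ?thesis .
    qed
    hence "f 0 * cosh (k * norm y) \<le> \<bar>f 0\<bar> * exp (k * norm y)" by (simp add: z_def)
    moreover have "(DV 0 \<bullet> u) * sinh (k * norm y) / k \<le> norm (DV 0) / k * exp (k * norm y)"
    proof -
      have "(DV 0 \<bullet> u) * sinh (k * norm y) \<le> \<bar>DV 0 \<bullet> u\<bar> * \<bar>sinh (k * norm y)\<bar>"
        by (metis abs_ge_self abs_mult)
      also have "\<dots> \<le> norm (DV 0) * exp (k * norm y)"
        apply (rule mult_mono)
        using Cauchy_Schwarz_ineq2[of "DV 0" u] nu s by (auto simp: z_def)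
      finally show ?thesis using k by (simp add: divide_right_mono)
    qed
    ultimately show ?thesis by simp
  qed
  finally have "V y + \<beta> / \<alpha> \<le> (\<bar>f 0\<bar> + norm (DV 0) / k) * exp (k * norm y)"
    using yu f_def by (metis distrib_right)
  moreover have "\<bar>f 0\<bar> = \<bar>V 0 + \<beta> / \<alpha>\<bar>" by (simp add: f_def)
  moreover have "- (\<beta> / \<alpha>) \<le> \<bar>\<beta> / \<alpha>\<bar> * exp (k * norm y)"
  proof -
    have "1 \<le> exp (k * norm y)" using k by simp
    hence "\<bar>\<beta> / \<alpha>\<bar> * 1 \<le> \<bar>\<beta> / \<alpha>\<bar> * exp (k * norm y)" by (rule mult_left_mono) simp
    thus ?thesis by linarith
  qed
  ultimately show ?thesis unfolding k_def by (simp add: algebra_simps)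
qed


lemma lipschitz_deriv_bound:
  fixes f :: "'a::real_normed_vector \<Rightarrow> 'b::real_normed_vector"
  assumes d: "(f has_derivative f') (at y)" and L: "\<And>z w. norm (f z - f w) \<le> L * norm (z - w)"
  shows "norm (f' h) \<le> L * norm h"
proof (cases "h = 0")
  case True
  have "linear f'" using d by (simp add: has_derivative_linear)
  thus ?thesis using True by (simp add: linear_0)
next
  case False
  have bl: "bounded_linear f'" using d by (simp add: has_derivative_bounded_linear)
  have key: "norm (f' h) \<le> (L + e) * norm h" if e: "e > 0" for e
  proof -
    obtain d where dpos: "d > 0" and dd: "\<And>z. norm (z - y) < d \<Longrightarrow> norm (f z - f y - f' (z - y)) \<le> e * norm (z - y)"
      using d e unfolding has_derivative_at_alt by blast
    define t where "t = d / (2 * norm h)"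
    have t: "t > 0" using dpos False by (simp add: t_def)
    have nt: "norm ((y + t *\<^sub>R h) - y) = t * norm h" using t by simp
    have "t * norm h < d" using dpos False by (simp add: t_def)
    hence a: "norm (f (y + t *\<^sub>R h) - f y - f' (t *\<^sub>R h)) \<le> e * (t * norm h)"
      using dd[of "y + t *\<^sub>R h"] nt t by simp
    have b: "norm (f (y + t *\<^sub>R h) - f y) \<le> L * (t * norm h)" using L[of "y + t *\<^sub>R h" y] nt t by simp
    have "norm (f' (t *\<^sub>R h)) \<le> norm (f (y + t *\<^sub>R h) - f y) + norm (f (y + t *\<^sub>R h) - f y - f' (t *\<^sub>R h))"
      by (rule order_trans[OF _ norm_triangle_ineq4]) simp
    also have "\<dots> \<le> (L + e) * (t * norm h)" using a b by (simp add: algebra_simps)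
    finally have "t * norm (f' h) \<le> t * ((L + e) * norm h)"
      using t by (simp add: linear_scale[OF bounded_linear.linear[OF bl]] algebra_simps)
    thus ?thesis using t by simp
  qed
  have "norm (f' h) \<le> L * norm h + e" if "e > 0" for e
    using key[of "e / norm h"] False that by (auto simp: algebra_simps)
  thus ?thesis by (meson field_le_epsilon)
qed

lemma psd_trace_bound:
  fixes f :: "'d::euclidean_space \<Rightarrow> 'd"
  assumes lin: "linear f" and psd: "\<And>h. f h \<bullet> h \<ge> 0" and u: "norm u \<le> 1"
  shows "f u \<bullet> u \<le> real DIM('d) * (\<Sum>b\<in>Basis. f b \<bullet> b)"
proof -
  define w where "w b b' = f b \<bullet> b'" for b b'
  define x where "x b = u \<bullet> b" for b
  have xb: "\<bar>x b\<bar> \<le> 1" if "b \<in> Basis" for b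
    using Basis_le_norm[OF that, of u] u by (simp add: x_def inner_commute)
  have S: "f u \<bullet> u = (\<Sum>b\<in>Basis. \<Sum>b'\<in>Basis. x b * x b' * w b b')"
  proof -
    have "f u = (\<Sum>b\<in>Basis. x b *\<^sub>R f b)"
      using linear_sum[OF lin, of "\<lambda>b. x b *\<^sub>R b" Basis] euclidean_representation[of u]
      by (simp add: x_def linear_scale[OF lin] inner_commute)
    hence "f u \<bullet> u = (\<Sum>b\<in>Basis. x b * (f b \<bullet> u))" by (simp add: inner_sum_left)
    also have "\<dots> = (\<Sum>b\<in>Basis. x b * (\<Sum>b'\<in>Basis. x b' * w b b'))"
    proof (rule sum.cong[OF refl])
      fix b :: 'd assume "b \<in> Basis"
      have "f b \<bullet> u = f b \<bullet> (\<Sum>b'\<in>Basis. x b' *\<^sub>R b')"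
        using euclidean_representation[of u] by (simp add: x_def inner_commute)
      also have "\<dots> = (\<Sum>b'\<in>Basis. x b' * w b b')" by (simp add: inner_sum_right w_def)
      finally show "x b * (f b \<bullet> u) = x b * (\<Sum>b'\<in>Basis. x b' * w b b')" by simp
    qed
    also have "\<dots> = (\<Sum>b\<in>Basis. \<Sum>b'\<in>Basis. x b * x b' * w b b')"
      by (simp add: sum_distrib_left mult.assoc)
    finally show ?thesis .
  qed
  have S': "(\<Sum>b\<in>Basis. \<Sum>b'\<in>Basis. x b * x b' * w b b') = (\<Sum>b\<in>Basis. \<Sum>b'\<in>Basis. x b * x b' * w b' b)"
    by (subst sum.swap) (simp add: mult.commute)
  have tm: "x b * x b' * (w b b' + w b' b) \<le> w b b + w b' b'" if "b \<in> Basis" "b' \<in> Basis" for b b'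
  proof -
    have p1: "f (b + b') \<bullet> (b + b') \<ge> 0" by (rule psd)
    have p2: "f (b - b') \<bullet> (b - b') \<ge> 0" by (rule psd)
    have e1: "f (b + b') \<bullet> (b + b') = w b b + w b b' + w b' b + w b' b'"
      by (simp add: linear_add[OF lin] inner_add_left inner_add_right w_def)
    have e2: "f (b - b') \<bullet> (b - b') = w b b - w b b' - w b' b + w b' b'"
      by (simp add: linear_diff[OF lin] inner_diff_left inner_diff_right w_def)
    have ab: "\<bar>w b b' + w b' b\<bar> \<le> w b b + w b' b'" using p1 p2 e1 e2 by linarith
    have xx: "\<bar>x b * x b'\<bar> \<le> 1" using xb[OF that(1)] xb[OF that(2)]
      by (simp add: abs_mult mult_le_one)
    have "x b * x b' * (w b b' + w b' b) \<le> \<bar>x b * x b'\<bar> * \<bar>w b b' + w b' b\<bar>"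
      by (metis abs_ge_self abs_mult)
    also have "\<dots> \<le> 1 * \<bar>w b b' + w b' b\<bar>" by (rule mult_right_mono[OF xx]) simp
    finally show ?thesis using ab by simp
  qed
  have sp: "(\<Sum>b\<in>Basis. \<Sum>b'\<in>Basis. x b * x b' * (w b b' + w b' b)) =
     (\<Sum>b\<in>Basis. \<Sum>b'\<in>Basis. x b * x b' * w b b') + (\<Sum>b\<in>Basis. \<Sum>b'\<in>Basis. x b * x b' * w b' b)"
    by (simp only: sum.distrib[symmetric] distrib_left)
  have "2 * (f u \<bullet> u) = (\<Sum>b\<in>Basis. \<Sum>b'\<in>Basis. x b * x b' * (w b b' + w b' b))"
    unfolding sp S'[symmetric] S by simp
  also have "\<dots> \<le> (\<Sum>b\<in>Basis. \<Sum>b'\<in>Basis. w b b + w b' b')"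
    by (intro sum_mono tm)
  also have "\<dots> = 2 * (real DIM('d) * (\<Sum>b\<in>Basis. w b b))"
    by (simp add: sum.distrib sum_distrib_left[symmetric] sum_constant algebra_simps)
  finally show ?thesis by (simp add: w_def)
qed


lemma vec_eq_from_inner:
  fixes a b :: "'a::real_inner"
  assumes "\<And>h. a \<bullet> h = b \<bullet> h" shows "a = b"
proof -
  have "(a - b) \<bullet> (a - b) = 0" using assms[of "a - b"] by (simp add: inner_diff_left)
  thus ?thesis by simp
qed

locale potential =
  fixes V W chi :: "'d::euclidean_space \<Rightarrow> real" and DV DW Dchi :: "'d \<Rightarrow> 'd"
    and D2V D2W :: "'d \<Rightarrow> ('d \<Rightarrow>\<^sub>L 'd)" and c a L :: real
  assumes V_nonneg: "\<forall>y. V y \<ge> 0"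
    and V_grad: "\<forall>y. (V has_derivative (\<lambda>h. DV y \<bullet> h)) (at y)"
    and V_hess: "\<forall>y. (DV has_derivative blinfun_apply (D2V y)) (at y)"
    and V_decomp: "\<forall>y. V y = W y + chi y"
    and W_grad: "\<forall>y. (W has_derivative (\<lambda>h. DW y \<bullet> h)) (at y)"
    and W_hess: "\<forall>y. (DW has_derivative blinfun_apply (D2W y)) (at y)"
    and c_pos: "c > 0"
    and W_convex: "\<forall>y h. c * (norm h)\<^sup>2 \<le> h \<bullet> blinfun_apply (D2W y) h"
    and chi_grad: "\<forall>y. (chi has_derivative (\<lambda>h. Dchi y \<bullet> h)) (at y)"
    and chi_supp: "compact (closure {y. chi y \<noteq> 0})"
    and chi_lip: "\<forall>y z. norm (Dchi y - Dchi z) \<le> L * dist y z"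
    and L_nonneg: "L \<ge> 0"
    and a_pos: "a > 0"
    and lap_bound: "\<forall>y. laplacian_of (D2V y) \<le> a * (1 + V y)"
begin

lemma DV_eq: "DV y = DW y + Dchi y"
proof -
  have "(V has_derivative (\<lambda>h. DW y \<bullet> h + Dchi y \<bullet> h)) (at y)"
  proof -
    have "((\<lambda>z. W z + chi z) has_derivative (\<lambda>h. DW y \<bullet> h + Dchi y \<bullet> h)) (at y)"
      using W_grad chi_grad by (intro has_derivative_add) auto
    moreover have "(\<lambda>z. W z + chi z) = V" using V_decomp by auto
    ultimately show ?thesis by simp
  qed
  from has_derivative_unique[OF V_grad[rule_format] this]
  have "\<And>h. DV y \<bullet> h = (DW y + Dchi y) \<bullet> h" by (metis inner_add_left)
  thus ?thesis by (rule vec_eq_from_inner)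
qed

lemma chi_zero_outside:
  assumes "y \<notin> closure {y. chi y \<noteq> 0}"
  shows "chi y = 0" "Dchi y = 0"
proof -
  let ?K = "closure {y. chi y \<noteq> 0}"
  show "chi y = 0"
  proof (rule ccontr)
    assume "chi y \<noteq> 0"
    hence "y \<in> {y. chi y \<noteq> 0}" by simp
    thus False using assms closure_subset by (metis subsetD)
  qed
  have op: "open (- ?K)" by auto
  have "((\<lambda>z. 0) has_derivative (\<lambda>h. Dchi y \<bullet> h)) (at y)"
  proof (rule has_derivative_transform_within_open[OF chi_grad[rule_format] op])
    show "y \<in> - ?K" using assms by simp
    show "\<And>z. z \<in> - ?K \<Longrightarrow> chi z = 0"
    proof (rule ccontr)
      fix z assume z: "z \<in> - ?K" and "chi z \<noteq> 0"
      hence "z \<in> {y. chi y \<noteq> 0}" by simp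
      thus False using z closure_subset by (metis ComplD subsetD)
    qed
  qed
  from has_derivative_unique[OF this has_derivative_const]
  have "\<And>h. Dchi y \<bullet> h = 0 \<bullet> h" by (metis inner_zero_left)
  thus "Dchi y = 0" by (rule vec_eq_from_inner)
qed

lemma chi_bounds: "\<exists>S K. S \<ge> 0 \<and> K \<ge> 0 \<and> (\<forall>y. \<bar>chi y\<bar> \<le> S \<and> norm (Dchi y) \<le> K)"
proof -
  let ?K = "closure {y. chi y \<noteq> 0}"
  have cont: "continuous_on UNIV chi"
    using chi_grad has_derivative_continuous by (metis continuous_at_imp_continuous_on)
  have "compact (chi ` ?K)" by (rule compact_continuous_image[OF continuous_on_subset[OF cont] chi_supp]) simp
  then obtain S where S: "\<forall>z\<in>chi ` ?K. norm z \<le> S" using compact_imp_bounded bounded_iff by metis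
  obtain R where R: "\<forall>z\<in>?K. norm z \<le> R" using compact_imp_bounded[OF chi_supp] bounded_iff by metis
  define K where "K = norm (Dchi 0) + L * \<bar>R\<bar>"
  have "\<bar>chi y\<bar> \<le> \<bar>S\<bar> \<and> norm (Dchi y) \<le> K" for y
  proof (cases "y \<in> ?K")
    case True
    have "norm (Dchi y) \<le> norm (Dchi 0) + norm (Dchi y - Dchi 0)" by (metis norm_triangle_sub add.commute)
    also have "\<dots> \<le> norm (Dchi 0) + L * norm y" using chi_lip[rule_format, of y 0] by (simp add: dist_norm)
    also have "\<dots> \<le> K" unfolding K_def using R True L_nonneg by (auto intro!: mult_left_mono)
    finally show ?thesis using S True by force
  next
    case False
    thus ?thesis using chi_zero_outside[OF False] L_nonneg by (simp add: K_def)
  qed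
  moreover have "K \<ge> 0" using L_nonneg by (simp add: K_def)
  ultimately show ?thesis by (meson abs_ge_zero)
qed

lemma W_strong:
  "W u \<ge> W y + DW y \<bullet> (u - y) + c / 2 * (norm (u - y))\<^sup>2"
proof -
  define h where "h = u - y"
  define p where "p t = W (y + t *\<^sub>R h)" for t
  define p' where "p' t = DW (y + t *\<^sub>R h) \<bullet> h" for t
  have lin: "((\<lambda>t. y + t *\<^sub>R h) has_derivative (\<lambda>s. s *\<^sub>R h)) (at t)" for t
    by (auto intro!: derivative_eq_intros)
  have dp: "(p has_real_derivative p' t) (at t)" for t
  proof -
    have "(p has_derivative (\<lambda>s. DW (y + t *\<^sub>R h) \<bullet> (s *\<^sub>R h))) (at t)"
      unfolding p_def using has_derivative_compose[OF lin W_grad[rule_format]] by simp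
    thus ?thesis unfolding has_field_derivative_def p'_def
      by (rule has_derivative_eq_rhs) (simp add: fun_eq_iff mult.commute)
  qed
  have dp': "(p' has_real_derivative (blinfun_apply (D2W (y + t *\<^sub>R h)) h \<bullet> h)) (at t)" for t
  proof -
    have "((\<lambda>t. DW (y + t *\<^sub>R h)) has_derivative (\<lambda>s. blinfun_apply (D2W (y + t *\<^sub>R h)) (s *\<^sub>R h))) (at t)"
      using has_derivative_compose[OF lin W_hess[rule_format]] by simp
    hence "(p' has_derivative (\<lambda>s. blinfun_apply (D2W (y + t *\<^sub>R h)) (s *\<^sub>R h) \<bullet> h)) (at t)"
      unfolding p'_def by (auto intro!: derivative_eq_intros)
    thus ?thesis unfolding has_field_derivative_def
      by (rule has_derivative_eq_rhs) (simp add: fun_eq_iff blinfun.scaleR_right mult.commute)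
  qed
  have conv: "blinfun_apply (D2W z) h \<bullet> h \<ge> c * (norm h)\<^sup>2" for z
    using W_convex by (metis inner_commute)
  have q: "p' t - c * t * (norm h)\<^sup>2 \<ge> p' 0" if "t \<ge> 0" for t
  proof -
    have "p' 0 - c * 0 * (norm h)\<^sup>2 \<le> p' t - c * t * (norm h)\<^sup>2"
      apply (rule DERIV_nonneg_imp_nondecreasing[OF that])
      apply (rule exI[of _ "blinfun_apply (D2W (_ + _ *\<^sub>R h)) h \<bullet> h - c * (norm h)\<^sup>2"])
      using conv by (auto intro!: derivative_eq_intros dp')
    thus ?thesis by simp
  qed
  have r: "p 1 - p' 0 * 1 - c / 2 * 1\<^sup>2 * (norm h)\<^sup>2 \<ge> p 0 - p' 0 * 0 - c / 2 * 0\<^sup>2 * (norm h)\<^sup>2"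
    apply (rule DERIV_nonneg_imp_nondecreasing[of 0 1])
     apply simp
    subgoal for x
      apply (rule exI[of _ "p' x - p' 0 - c * x * (norm h)\<^sup>2"])
      apply (rule conjI)
       apply (rule derivative_eq_intros dp refl | simp)+
       apply (simp add: power2_eq_square algebra_simps)
      using q[of x] by (simp add: power2_eq_square algebra_simps)
    done
  thus ?thesis by (simp add: p_def p'_def h_def algebra_simps)
qed

lemma key_ineq: "\<exists>S K. S \<ge> 0 \<and> K \<ge> 0 \<and>
   (\<forall>y u. (y - u) \<bullet> DV y \<ge> c / 2 * (norm (y - u))\<^sup>2 - K * norm (y - u) - V u - 2 * S)"
proof -
  obtain S K where SK: "S \<ge> 0" "K \<ge> 0" "\<And>y. \<bar>chi y\<bar> \<le> S" "\<And>y. norm (Dchi y) \<le> K"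
    using chi_bounds by blast
  have "(y - u) \<bullet> DV y \<ge> c / 2 * (norm (y - u))\<^sup>2 - K * norm (y - u) - V u - 2 * S" for y u
  proof -
    have w: "W u \<ge> W y + DW y \<bullet> (u - y) + c / 2 * (norm (u - y))\<^sup>2" by (rule W_strong)
    have e1: "DW y \<bullet> (u - y) = - ((y - u) \<bullet> DW y)" by (simp add: inner_diff_left inner_diff_right inner_commute)
    have e2: "norm (u - y) = norm (y - u)" by (rule norm_minus_commute)
    have wy: "W y \<ge> - S" using V_decomp V_nonneg SK(3)[of y] by (smt (verit))
    have wu: "W u \<le> V u + S" using V_decomp SK(3)[of u] by (smt (verit))
    have cs: "(y - u) \<bullet> Dchi y \<ge> - (K * norm (y - u))"
    proof -
      have "\<bar>(y - u) \<bullet> Dchi y\<bar> \<le> norm (y - u) * norm (Dchi y)" by (rule Cauchy_Schwarz_ineq2)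
      also have "\<dots> \<le> norm (y - u) * K" using SK(4) by (simp add: mult_left_mono)
      finally show ?thesis by (simp add: mult.commute)
    qed
    have "(y - u) \<bullet> DV y = (y - u) \<bullet> DW y + (y - u) \<bullet> Dchi y" by (simp add: DV_eq inner_add_right)
    thus ?thesis using w[unfolded e2] e1 wy wu cs by linarith
  qed
  thus ?thesis using SK by blast
qed

lemma quad_bound:
  assumes u: "norm u = 1"
  shows "blinfun_apply (D2V y) u \<bullet> u \<le> (real DIM('d) * a) * V y + (real DIM('d) * a + real DIM('d) * real DIM('d) * L)"
proof -
  have dchi: "(Dchi has_derivative (\<lambda>h. blinfun_apply (D2V y) h - blinfun_apply (D2W y) h)) (at y)"
  proof -
    have "((\<lambda>z. DV z - DW z) has_derivative (\<lambda>h. blinfun_apply (D2V y) h - blinfun_apply (D2W y) h)) (at y)"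
      using V_hess W_hess by (intro has_derivative_diff) auto
    moreover have "(\<lambda>z. DV z - DW z) = Dchi" by (auto simp: DV_eq)
    ultimately show ?thesis by simp
  qed
  have lipb: "norm (blinfun_apply (D2V y) h - blinfun_apply (D2W y) h) \<le> L * norm h" for h
    by (rule lipschitz_deriv_bound[OF dchi]) (use chi_lip in \<open>auto simp: dist_norm\<close>)
  define f where "f h = blinfun_apply (D2V y) h + L *\<^sub>R h" for h
  have lin: "linear f" unfolding f_def
    by (rule linearI) (simp_all add: blinfun.add_right blinfun.scaleR_right algebra_simps scaleR_add_right)
  have psd: "f h \<bullet> h \<ge> 0" for h
  proof -
    have c1: "blinfun_apply (D2W y) h \<bullet> h \<ge> c * (norm h)\<^sup>2" using W_convex by (metis inner_commute)
    have "\<bar>(blinfun_apply (D2V y) h - blinfun_apply (D2W y) h) \<bullet> h\<bar> \<le> L * norm h * norm h"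
      using Cauchy_Schwarz_ineq2[of "blinfun_apply (D2V y) h - blinfun_apply (D2W y) h" h] lipb[of h]
      by (meson mult_right_mono norm_ge_zero order_trans)
    hence c2: "(blinfun_apply (D2V y) h - blinfun_apply (D2W y) h) \<bullet> h \<ge> - (L * (norm h)\<^sup>2)"
      by (simp add: power2_eq_square abs_le_iff mult.assoc)
    have "f h \<bullet> h = blinfun_apply (D2W y) h \<bullet> h + (blinfun_apply (D2V y) h - blinfun_apply (D2W y) h) \<bullet> h + L * (norm h)\<^sup>2"
      by (simp add: f_def inner_add_left inner_diff_left power2_norm_eq_inner)
    moreover have "c * (norm h)\<^sup>2 \<ge> 0" using c_pos by simp
    ultimately show ?thesis using c1 c2 by linarith
  qed
  have tb: "f u \<bullet> u \<le> real DIM('d) * (\<Sum>b\<in>Basis. f b \<bullet> b)"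
    by (rule psd_trace_bound[OF lin psd]) (simp add: u)
  have tr: "(\<Sum>b\<in>Basis. f b \<bullet> b) = laplacian_of (D2V y) + L * real DIM('d)"
  proof -
    have "(\<Sum>b\<in>Basis. f b \<bullet> b) = (\<Sum>b\<in>Basis. b \<bullet> blinfun_apply (D2V y) b + L)"
    proof (rule sum.cong[OF refl])
      fix b :: 'd assume "b \<in> Basis"
      thus "f b \<bullet> b = b \<bullet> blinfun_apply (D2V y) b + L" by (simp add: f_def inner_add_left inner_add_right inner_commute)
    qed
    thus ?thesis by (simp add: sum.distrib laplacian_of_def)
  qed
  have fu: "f u \<bullet> u = blinfun_apply (D2V y) u \<bullet> u + L"
    using u by (simp add: f_def inner_add_left power2_norm_eq_inner[symmetric])
  have "real DIM('d) * laplacian_of (D2V y) \<le> real DIM('d) * (a * (1 + V y))"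
    using lap_bound by (simp add: mult_left_mono)
  thus ?thesis using tb tr fu L_nonneg by (simp add: algebra_simps)
qed

lemma growth: "\<exists>C k. C \<ge> 0 \<and> k \<ge> 0 \<and> (\<forall>y. V y \<le> C * exp (k * norm y))"
proof -
  define \<alpha> where "\<alpha> = real DIM('d) * a"
  define \<beta> where "\<beta> = real DIM('d) * a + real DIM('d) * real DIM('d) * L"
  have al: "\<alpha> > 0" using a_pos by (simp add: \<alpha>_def)
  have "V y \<le> (\<bar>V 0 + \<beta> / \<alpha>\<bar> + norm (DV 0) / sqrt \<alpha> + \<bar>\<beta> / \<alpha>\<bar>) * exp (sqrt \<alpha> * norm y)" for y
    by (rule V_growth[OF V_grad V_hess _ al]) (use quad_bound in \<open>simp add: \<alpha>_def \<beta>_def\<close>)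
  moreover have "\<bar>V 0 + \<beta> / \<alpha>\<bar> + norm (DV 0) / sqrt \<alpha> + \<bar>\<beta> / \<alpha>\<bar> \<ge> 0" using al by simp
  moreover have "sqrt \<alpha> \<ge> 0" using al by simp
  ultimately show ?thesis by blast
qed

end


definition Hfun :: "real \<Rightarrow> real \<Rightarrow> real \<Rightarrow> real \<Rightarrow> real \<Rightarrow> ('d::euclidean_space \<Rightarrow> real) \<Rightarrow> 'd \<Rightarrow> real" where
  "Hfun c K S r g0 V u = 2 * V u + 4 * S + 2 * (K + norm u / (r * g0))\<^sup>2 / c"

lemma ode_ineq:
  fixes z u :: "'d::euclidean_space" and DV :: "'d \<Rightarrow> 'd"
  assumes key: "\<forall>y u. (y - u) \<bullet> DV y \<ge> c / 2 * (norm (y - u))\<^sup>2 - K * norm (y - u) - V u - 2 * S"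
    and c: "c > 0" and K: "K \<ge> 0" and r: "r > 0" and g0: "g0 > 0" and gg: "gs \<ge> g0" and s: "s \<ge> 0"
  shows "2 * (z \<bullet> (- (gs *\<^sub>R DV (z + u) + (1 / (r + s)) *\<^sub>R (z + u))))
     \<le> - (c / 2) * gs * (norm z)\<^sup>2 + gs * Hfun c K S r g0 V u"
proof -
  define n where "n = norm z"
  define m where "m = norm u"
  have n: "n \<ge> 0" "m \<ge> 0" by (auto simp: n_def m_def)
  have gpos: "gs > 0" using gg g0 by linarith
  have k: "z \<bullet> DV (z + u) \<ge> c / 2 * n\<^sup>2 - K * n - V u - 2 * S"
    using key[rule_format, of "z + u" u] by (simp add: n_def)
  have rs: "r + s \<ge> r" using s by simp
  have t2: "- (z \<bullet> (z + u)) / (r + s) \<le> n * m / r"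
  proof -
    have "- (z \<bullet> (z + u)) = - (n\<^sup>2) - z \<bullet> u" by (simp add: inner_add_right n_def power2_norm_eq_inner)
    also have "\<dots> \<le> n * m"
    proof -
      have "- (z \<bullet> u) \<le> n * m" using Cauchy_Schwarz_ineq2[of z u] by (simp add: n_def m_def abs_le_iff)
      thus ?thesis using zero_le_power2[of n] by linarith
    qed
    finally have a: "- (z \<bullet> (z + u)) \<le> n * m" .
    have "- (z \<bullet> (z + u)) / (r + s) \<le> n * m / (r + s)" by (rule divide_right_mono[OF a]) (use r s in simp)
    also have "\<dots> \<le> n * m / r" using r s n by (simp add: frac_le mult_nonneg_nonneg)
    finally show ?thesis .
  qed
  have lhs: "2 * (z \<bullet> (- (gs *\<^sub>R DV (z + u) + (1 / (r + s)) *\<^sub>R (z + u))))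
      = - 2 * gs * (z \<bullet> DV (z + u)) + 2 * (- (z \<bullet> (z + u)) / (r + s))"
    by (simp add: inner_add_right inner_minus_right algebra_simps add_divide_distrib diff_divide_distrib)
  have nm: "n * m / r \<le> gs * (n * (m / (r * g0)))"
  proof -
    have "n * m / r = g0 * (n * (m / (r * g0)))" using g0 r by (simp add: field_simps)
    also have "\<dots> \<le> gs * (n * (m / (r * g0)))" using gg n r g0 by (intro mult_right_mono) auto
    finally show ?thesis .
  qed
  define A where "A = K + m / (r * g0)"
  have sq: "2 * n * A \<le> c / 2 * n\<^sup>2 + 2 * A\<^sup>2 / c"
  proof -
    have "0 \<le> c / 2 * (n - 2 * A / c)\<^sup>2" using c by simp
    also have "c / 2 * (n - 2 * A / c)\<^sup>2 = c / 2 * n\<^sup>2 - 2 * n * A + 2 * A\<^sup>2 / c"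
      using c by (simp add: power2_eq_square field_simps)
    finally show ?thesis by linarith
  qed
  have "- 2 * gs * (z \<bullet> DV (z + u)) \<le> - 2 * gs * (c / 2 * n\<^sup>2 - K * n - V u - 2 * S)"
    using k gpos by (simp add: mult_le_cancel_left)
  hence "2 * (z \<bullet> (- (gs *\<^sub>R DV (z + u) + (1 / (r + s)) *\<^sub>R (z + u))))
      \<le> - 2 * gs * (c / 2 * n\<^sup>2 - K * n - V u - 2 * S) + 2 * (gs * (n * (m / (r * g0))))"
    using lhs t2 nm by linarith
  also have "\<dots> = - gs * c * n\<^sup>2 + gs * (2 * n * A) + gs * (2 * V u + 4 * S)"
    by (simp add: A_def algebra_simps)
  also have "\<dots> \<le> - gs * c * n\<^sup>2 + gs * (c / 2 * n\<^sup>2 + 2 * A\<^sup>2 / c) + gs * (2 * V u + 4 * S)"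
    using sq gpos by (simp add: mult_left_mono)
  also have "\<dots> = - (c / 2) * gs * (norm z)\<^sup>2 + gs * Hfun c K S r g0 V u"
    by (simp add: Hfun_def A_def m_def n_def algebra_simps)
  finally show ?thesis .
qed

lemma pathwise_bound:
  fixes Z U :: "real \<Rightarrow> 'd::euclidean_space" and V :: "'d \<Rightarrow> real" and DV :: "'d \<Rightarrow> 'd"
    and g G :: "real \<Rightarrow> real"
  assumes key: "\<forall>y u. (y - u) \<bullet> DV y \<ge> c / 2 * (norm (y - u))\<^sup>2 - K * norm (y - u) - V u - 2 * S"
    and c: "c > 0" and K: "K \<ge> 0" and r: "r > 0" and g0: "g0 > 0"
    and tau: "0 \<le> \<tau>" "\<tau> \<le> T"
    and g_ge: "\<forall>s\<in>{\<tau>..T}. g s \<ge> g0"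
    and g_cont: "continuous_on {\<tau>..T} g"
    and G_der: "\<forall>s\<in>{\<tau><..<T}. (G has_real_derivative g s) (at s)"
    and G_cont: "continuous_on {\<tau>..T} G"
    and V_cont: "continuous_on UNIV V"
    and U_cont: "continuous_on {\<tau>..T} U"
    and Z_cont: "continuous_on {\<tau>..T} Z"
    and Z_der: "\<forall>s\<in>{\<tau><..<T}. (Z has_vector_derivative
          - (g s *\<^sub>R DV (Z s + U s) + (1 / (r + s)) *\<^sub>R (Z s + U s))) (at s)"
  shows "(norm (Z T))\<^sup>2 \<le> exp (- (c / 2) * (G T - G \<tau>)) * (norm (Z \<tau>))\<^sup>2
      + integral {\<tau>..T} (\<lambda>s. exp (- (c / 2) * (G T - G s)) * g s * Hfun c K S r g0 V (U s))"
proof -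
  define Hf where "Hf s = Hfun c K S r g0 V (U s)" for s
  define E where "E s = exp ((c / 2) * G s)" for s
  define F where "F s = E s * g s * Hf s" for s
  have Hf_cont: "continuous_on {\<tau>..T} Hf"
    unfolding Hf_def Hfun_def using U_cont r g0 c
    by (intro continuous_intros continuous_on_compose2[OF V_cont U_cont]) auto
  have F_cont: "continuous_on {\<tau>..T} F"
    unfolding F_def E_def using Hf_cont g_cont G_cont by (intro continuous_intros) auto
  define I where "I s = integral {\<tau>..s} F" for s
  define \<phi> where "\<phi> s = Z s \<bullet> Z s" for s
  define \<psi> where "\<psi> s = E s * \<phi> s - I s" for s
  have psi_cont: "continuous_on {\<tau>..T} \<psi>"
  proof -
    have "continuous_on {\<tau>..T} I" unfolding I_def
      by (rule indefinite_integral_continuous_1[OF integrable_continuous_real[OF F_cont]])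
    thus ?thesis unfolding \<psi>_def E_def \<phi>_def using G_cont Z_cont
      by (intro continuous_intros) auto
  qed
  have psi_der: "\<exists>y. (\<psi> has_real_derivative y) (at s) \<and> y \<le> 0" if s: "s \<in> {\<tau><..<T}" for s
  proof -
    let ?Zd = "- (g s *\<^sub>R DV (Z s + U s) + (1 / (r + s)) *\<^sub>R (Z s + U s))"
    have Zd: "(Z has_derivative (\<lambda>h. h *\<^sub>R ?Zd)) (at s)"
      using Z_der s unfolding has_vector_derivative_def by blast
    have dphi: "(\<phi> has_real_derivative 2 * (Z s \<bullet> ?Zd)) (at s)"
    proof -
      have "(\<phi> has_derivative (\<lambda>h. Z s \<bullet> (h *\<^sub>R ?Zd) + (h *\<^sub>R ?Zd) \<bullet> Z s)) (at s)"
        unfolding \<phi>_def by (rule has_derivative_inner[OF Zd Zd])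
      thus ?thesis unfolding has_field_derivative_def
        by (rule has_derivative_eq_rhs) (auto simp: fun_eq_iff inner_commute algebra_simps)
    qed
    have dE: "(E has_real_derivative E s * ((c / 2) * g s)) (at s)"
      unfolding E_def using G_der s by (auto intro!: derivative_eq_intros)
    have sI: "s \<in> {\<tau>..T}" using s by auto
    have dI: "(I has_real_derivative F s) (at s)"
    proof -
      have "(I has_real_derivative F s) (at s within {\<tau>..T})"
        unfolding I_def by (rule integral_has_real_derivative[OF F_cont sI])
      moreover have "at s within {\<tau>..T} = at s" using s by (intro at_within_Icc_at) auto
      ultimately show ?thesis by simp
    qed
    have dpsi: "(\<psi> has_real_derivative (E s * ((c / 2) * g s)) * \<phi> s + E s * (2 * (Z s \<bullet> ?Zd)) - F s) (at s)"
      unfolding \<psi>_def by (rule DERIV_diff[OF DERIV_mult[OF dE dphi] dI, THEN DERIV_cong]) (simp add: algebra_simps)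
    have gs: "g s \<ge> g0" using g_ge sI by blast
    have ineq: "2 * (Z s \<bullet> ?Zd) \<le> - (c / 2) * g s * (norm (Z s))\<^sup>2 + g s * Hf s"
      unfolding Hf_def by (rule ode_ineq[OF key c K r g0 gs]) (use s tau in auto)
    have Epos: "E s > 0" by (simp add: E_def)
    have "E s * ((c / 2) * g s) * \<phi> s + E s * (2 * (Z s \<bullet> ?Zd)) - F s
        = E s * ((c / 2) * g s * (norm (Z s))\<^sup>2 + 2 * (Z s \<bullet> ?Zd) - g s * Hf s)"
      by (simp add: F_def \<phi>_def power2_norm_eq_inner algebra_simps)
    also have "\<dots> \<le> 0" using ineq Epos by (intro mult_nonneg_nonpos) auto
    finally show ?thesis using dpsi by blast
  qed
  have "\<psi> T \<le> \<psi> \<tau>"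
    by (rule DERIV_nonpos_imp_decreasing_open[OF tau(2) _ psi_cont]) (use psi_der in auto)
  hence main: "E T * \<phi> T \<le> E \<tau> * \<phi> \<tau> + I T" by (simp add: \<psi>_def I_def)
  have ET: "E T > 0" by (simp add: E_def)
  have ee: "E s / E T = exp (- (c / 2) * (G T - G s))" for s
  proof -
    have "E s / E T = exp ((c / 2) * G s - (c / 2) * G T)" unfolding E_def by (rule exp_diff[symmetric])
    also have "(c / 2) * G s - (c / 2) * G T = - (c / 2) * (G T - G s)" by (simp add: field_simps)
    finally show ?thesis .
  qed
  have "\<phi> T \<le> (E \<tau> * \<phi> \<tau> + I T) / E T" using main ET by (simp add: pos_le_divide_eq mult.commute)
  also have "\<dots> = exp (- (c / 2) * (G T - G \<tau>)) * \<phi> \<tau> + I T / E T"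
  proof -
    have "(E \<tau> * \<phi> \<tau> + I T) / E T = (E \<tau> / E T) * \<phi> \<tau> + I T / E T" by (simp add: add_divide_distrib)
    thus ?thesis by (simp only: ee)
  qed
  also have "I T / E T = integral {\<tau>..T} (\<lambda>s. exp (- (c / 2) * (G T - G s)) * g s * Hf s)"
  proof -
    have "I T / E T = (1 / E T) * integral {\<tau>..T} F" by (simp add: I_def)
    also have "\<dots> = integral {\<tau>..T} (\<lambda>s. (1 / E T) * F s)" by simp
    also have "\<dots> = integral {\<tau>..T} (\<lambda>s. exp (- (c / 2) * (G T - G s)) * g s * Hf s)"
    proof (rule integral_cong)
      fix s
      have "(1 / E T) * F s = (E s / E T) * g s * Hf s" by (simp add: F_def)
      thus "(1 / E T) * F s = exp (- (c / 2) * (G T - G s)) * g s * Hf s" by (simp only: ee)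
    qed
    finally show ?thesis .
  qed
  finally show ?thesis by (simp add: \<phi>_def power2_norm_eq_inner Hf_def)
qed


lemma gauss_density_identity:
  fixes n v p :: real
  assumes v: "0 < v" "v < 2"
  defines "v' \<equiv> 2 * v / (2 - v)"
  shows "(2 * pi * v) powr (- p) * exp (- n\<^sup>2 / (2 * v)) * exp (n\<^sup>2 / 4)
       = (v' / v) powr p * ((2 * pi * v') powr (- p) * exp (- n\<^sup>2 / (2 * v')))"
proof -
  have v'pos: "v' > 0" using v by (simp add: v'_def)
  have e: "- n\<^sup>2 / (2 * v) + n\<^sup>2 / 4 = - n\<^sup>2 / (2 * v')"
    using v by (simp add: v'_def field_simps)
  have pw: "(2 * pi * v) powr (- p) = (v' / v) powr p * (2 * pi * v') powr (- p)"
  proof -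
    have "(v' / v) powr p * (2 * pi * v') powr (- p) = (v' powr p / v powr p) * ((2 * pi) powr (- p) * v' powr (- p))"
      using v v'pos by (simp add: powr_divide powr_mult)
    also have "\<dots> = (2 * pi) powr (- p) * v powr (- p)"
      using v v'pos by (simp add: powr_minus field_simps)
    also have "\<dots> = (2 * pi * v) powr (- p)" using v by (simp add: powr_mult)
    finally show ?thesis by simp
  qed
  show ?thesis using e pw by (simp add: exp_add[symmetric] mult.assoc)
qed

lemma gauss_moment:
  fixes v :: real
  assumes v: "0 < v" "v \<le> 1"
    and P: "prob_space (gaussian_iso (2 * v / (2 - v)) :: 'd::euclidean_space measure)"
  shows "(\<integral>\<^sup>+y. ennreal (exp ((norm y)\<^sup>2 / 4)) \<partial>(gaussian_iso v :: 'd measure)) \<le> ennreal (2 powr (real DIM('d) / 2))"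
proof -
  define v' where "v' = 2 * v / (2 - v)"
  define p where "p = real DIM('d) / 2"
  define q where "q = (v' / v) powr p"
  have v'pos: "v' > 0" using v by (simp add: v'_def)
  define gd where "gd w y = (2 * pi * w) powr (- real DIM('d) / 2) * exp (- (norm y)\<^sup>2 / (2 * w))" for w and y :: 'd
  have gdnn: "gd w y \<ge> 0" for w y by (simp add: gd_def)
  have gi: "gaussian_iso w = density lborel (\<lambda>y. ennreal (gd w y))" for w
    by (simp add: gaussian_iso_def gd_def)
  have meas: "(\<lambda>y. ennreal (gd w y)) \<in> borel_measurable lborel" for w
    unfolding gd_def by measurable
  have "(\<integral>\<^sup>+y. ennreal (exp ((norm y)\<^sup>2 / 4)) \<partial>(gaussian_iso v :: 'd measure))
      = (\<integral>\<^sup>+y. ennreal (gd v y) * ennreal (exp ((norm y)\<^sup>2 / 4)) \<partial>lborel)"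
    unfolding gi by (rule nn_integral_density[OF meas]) measurable
  also have "\<dots> = (\<integral>\<^sup>+y. ennreal q * ennreal (gd v' y) \<partial>lborel)"
  proof (rule nn_integral_cong)
    fix y :: 'd
    have "gd v y * exp ((norm y)\<^sup>2 / 4) = q * gd v' y"
    proof -
      have pe: "- real DIM('d) / 2 = - p" by (simp add: p_def)
      show ?thesis unfolding gd_def pe q_def v'_def
        by (rule gauss_density_identity) (use v in auto)
    qed
    thus "ennreal (gd v y) * ennreal (exp ((norm y)\<^sup>2 / 4)) = ennreal q * ennreal (gd v' y)"
      using gdnn by (simp add: ennreal_mult[symmetric] q_def)
  qed
  also have "\<dots> = ennreal q * (\<integral>\<^sup>+y. ennreal (gd v' y) \<partial>lborel)"
    by (rule nn_integral_cmult) (rule meas)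
  also have "(\<integral>\<^sup>+y. ennreal (gd v' y) \<partial>lborel) = 1"
  proof -
    interpret prob_space "gaussian_iso v' :: 'd measure" using P by (simp add: v'_def)
    have "emeasure (gaussian_iso v' :: 'd measure) UNIV = 1"
      using emeasure_space_1 by (simp add: gi)
    moreover have "emeasure (gaussian_iso v' :: 'd measure) UNIV = (\<integral>\<^sup>+y. ennreal (gd v' y) * indicator UNIV y \<partial>lborel)"
      unfolding gi by (rule emeasure_density[OF meas]) simp
    ultimately show ?thesis by simp
  qed
  also have "ennreal q * 1 \<le> ennreal (2 powr (real DIM('d) / 2))"
  proof -
    have "v' / v \<le> 2" using v by (simp add: v'_def field_simps)
    hence "q \<le> 2 powr p" unfolding q_def using v v'pos by (intro powr_mono2) (auto simp: p_def)
    thus ?thesis by (simp add: p_def)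
  qed
  finally show ?thesis .
qed


lemma cont_proc_measurable:
  fixes X :: "real \<Rightarrow> 'a \<Rightarrow> 'b::euclidean_space"
  assumes meas: "\<And>t. X t \<in> borel_measurable M" and cont: "\<And>\<omega>. continuous_on UNIV (\<lambda>t. X t \<omega>)"
  shows "(\<lambda>p. X (snd p) (fst p)) \<in> borel_measurable (M \<Otimes>\<^sub>M lborel)"
proof (rule borel_measurable_LIMSEQ_metric)
  fix n :: nat
  show "(\<lambda>p. X (real_of_int \<lfloor>real (Suc n) * snd p\<rfloor> / real (Suc n)) (fst p)) \<in> borel_measurable (M \<Otimes>\<^sub>M lborel)"
  proof (rule measurable_compose_countable[where f = "\<lambda>i p. X (real_of_int i / real (Suc n)) (fst p)"])
    show "\<And>i. (\<lambda>p. X (real_of_int i / real (Suc n)) (fst p)) \<in> borel_measurable (M \<Otimes>\<^sub>M lborel)"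
      by (rule measurable_compose[OF measurable_fst meas])
    show "(\<lambda>p. \<lfloor>real (Suc n) * snd p\<rfloor>) \<in> measurable (M \<Otimes>\<^sub>M lborel) (count_space UNIV)"
      by (rule measurable_compose[OF _ measurable_real_floor]) measurable
  qed
next
  fix p :: "'a \<times> real"
  define s where "s = snd p"
  define r where "r n = real_of_int \<lfloor>real (Suc n) * s\<rfloor> / real (Suc n)" for n :: nat
  have rb: "s - inverse (real (Suc n)) \<le> r n \<and> r n \<le> s" for n
  proof -
    have a: "real_of_int \<lfloor>real (Suc n) * s\<rfloor> \<le> real (Suc n) * s" by (rule of_int_floor_le)
    have b: "real (Suc n) * s - 1 \<le> real_of_int \<lfloor>real (Suc n) * s\<rfloor>" by linarith
    have pos: "real (Suc n) > 0" by simp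
    define N where "N = real (Suc n)"
    define F where "F = real_of_int \<lfloor>real (Suc n) * s\<rfloor>"
    have Np: "N > 0" by (simp add: N_def)
    have a': "F \<le> N * s" and b': "N * s - 1 \<le> F" using a b by (simp_all add: N_def F_def)
    have 1: "F / N \<le> s" using a' Np by (simp add: divide_le_eq mult.commute)
    have "(N * s - 1) / N \<le> F / N" using b' Np by (simp add: divide_right_mono)
    moreover have "(N * s - 1) / N = s - inverse N" using Np by (simp add: field_simps)
    ultimately have 2: "s - inverse N \<le> F / N" by simp
    show ?thesis using 1 2 by (simp add: r_def N_def F_def)
  qed
  have "r \<longlonglongrightarrow> s"
  proof (rule tendsto_sandwich[of "\<lambda>n. s - inverse (real (Suc n))" _ _ "\<lambda>n. s"])
    show "\<forall>\<^sub>F n in sequentially. s - inverse (real (Suc n)) \<le> r n" using rb by simp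
    show "\<forall>\<^sub>F n in sequentially. r n \<le> s" using rb by simp
    show "(\<lambda>n. s - inverse (real (Suc n))) \<longlonglongrightarrow> s"
      using tendsto_diff[OF tendsto_const LIMSEQ_inverse_real_of_nat, of s] by simp
  qed simp
  moreover have "isCont (\<lambda>t. X t (fst p)) s" using cont[of "fst p"] by (simp add: continuous_on_eq_continuous_at)
  ultimately have "(\<lambda>n. X (r n) (fst p)) \<longlonglongrightarrow> X s (fst p)" by (rule isCont_tendsto_compose[rotated])
  thus "(\<lambda>n. X (real_of_int \<lfloor>real (Suc n) * snd p\<rfloor> / real (Suc n)) (fst p)) \<longlonglongrightarrow> X (snd p) (fst p)"
    by (simp add: r_def s_def)
qed


locale sde =
  fixes M :: "'a measure" and B :: "real \<Rightarrow> 'a \<Rightarrow> 'd::euclidean_space" and Y :: "real \<Rightarrow> 'a \<Rightarrow> 'd"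
    and V :: "'d \<Rightarrow> real" and DV :: "'d \<Rightarrow> 'd" and g :: "real \<Rightarrow> real"
    and r c K S CV kV :: real and y0 :: 'd
  assumes BM: "std_brownian_motion M B"
    and key: "\<forall>y u. (y - u) \<bullet> DV y \<ge> c / 2 * (norm (y - u))\<^sup>2 - K * norm (y - u) - V u - 2 * S"
    and c_pos: "c > 0" and K_nonneg: "K \<ge> 0" and S_nonneg: "S \<ge> 0"
    and V_nonneg: "\<forall>y. V y \<ge> 0"
    and V_cont: "continuous_on UNIV V" and DV_cont: "continuous_on UNIV DV"
    and V_growth: "\<forall>y. V y \<le> CV * exp (kV * norm y)" and CV_nonneg: "CV \<ge> 0" and kV_nonneg: "kV \<ge> 0"
    and g_cont: "continuous_on {0..} g" and g_pos: "\<forall>t\<ge>0. g t > 0" and g_mono: "mono_on {0..} g"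
    and r_pos: "r > 0"
    and Y_meas: "\<forall>t\<ge>0. Y t \<in> borel_measurable M"
    and Y_sol: "AE \<omega> in M. continuous_on {0..} (\<lambda>t. Y t \<omega>) \<and>
        (\<forall>t\<ge>0. Y t \<omega> = y0 + B t \<omega>
            - integral {0..t} (\<lambda>s. g s *\<^sub>R DV (Y s \<omega>) + (1 / (r + s)) *\<^sub>R Y s \<omega>))"
begin

lemma prob: "prob_space M" using BM by (simp add: std_brownian_motion_def)

lemma B_meas: "t \<ge> 0 \<Longrightarrow> B t \<in> borel_measurable M" using BM by (simp add: std_brownian_motion_def)

lemma B_AE: "AE \<omega> in M. B 0 \<omega> = 0 \<and> continuous_on {0..} (\<lambda>t. B t \<omega>)"
  using BM by (simp add: std_brownian_motion_def)

lemma B_incr: "0 \<le> s \<Longrightarrow> s < t \<Longrightarrow> distr M borel (\<lambda>\<omega>. B t \<omega> - B s \<omega>) = gaussian_iso (t - s)"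
  using BM by (simp add: std_brownian_motion_def)

lemma gauss_prob: assumes "w > 0" shows "prob_space (gaussian_iso w :: 'd measure)"
proof -
  interpret prob_space M by (rule prob)
  have [measurable]: "B w \<in> borel_measurable M" "B 0 \<in> borel_measurable M" using B_meas assms by auto
  have "prob_space (distr M borel (\<lambda>\<omega>. B w \<omega> - B 0 \<omega>))"
    by (rule prob_space_distr) measurable
  thus ?thesis using B_incr[of 0 w] assms by simp
qed

definition g0 where "g0 = g 0"

lemma g_ge: "t \<ge> 0 \<Longrightarrow> g t \<ge> g0"
  using g_mono unfolding g0_def by (auto simp: mono_on_def)

lemma g0_pos: "g0 > 0" using g_pos by (simp add: g0_def)

lemma incr_moment:
  fixes f :: "'d \<Rightarrow> real"
  assumes tau: "0 \<le> \<tau>" "\<tau> \<le> s" "s \<le> \<tau> + 1"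
    and fm: "f \<in> borel_measurable borel" and fb: "\<And>u. f u \<le> A * exp ((norm u)\<^sup>2 / 4)" and A: "A \<ge> 0"
  shows "(\<integral>\<^sup>+\<omega>. ennreal (f (B s \<omega> - B \<tau> \<omega>)) \<partial>M) \<le> ennreal (A * 2 powr (real DIM('d) / 2))"
proof -
  interpret prob_space M by (rule prob)
  have two: "2 powr (real DIM('d) / 2) \<ge> 1" by (simp add: ge_one_powr_ge_zero)
  show ?thesis
  proof (cases "s = \<tau>")
    case True
    have "(\<integral>\<^sup>+\<omega>. ennreal (f (B s \<omega> - B \<tau> \<omega>)) \<partial>M) = ennreal (f 0)" by (simp add: True emeasure_space_1)
    also have "\<dots> \<le> ennreal (A * 2 powr (real DIM('d) / 2))"
    proof (rule ennreal_leI)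
      have "f 0 \<le> A" using fb[of 0] by simp
      also have "A \<le> A * 2 powr (real DIM('d) / 2)" using A two by (simp add: mult_le_cancel_left1)
      finally show "f 0 \<le> A * 2 powr (real DIM('d) / 2)" .
    qed
    finally show ?thesis .
  next
    case False
    define v where "v = s - \<tau>"
    have v: "0 < v" "v \<le> 1" using False tau by (auto simp: v_def)
    have [measurable]: "B s \<in> borel_measurable M" "B \<tau> \<in> borel_measurable M" using B_meas tau by auto
    have Xm: "(\<lambda>\<omega>. B s \<omega> - B \<tau> \<omega>) \<in> measurable M borel" by measurable
    have "(\<integral>\<^sup>+\<omega>. ennreal (f (B s \<omega> - B \<tau> \<omega>)) \<partial>M)
        = (\<integral>\<^sup>+y. ennreal (f y) \<partial>distr M borel (\<lambda>\<omega>. B s \<omega> - B \<tau> \<omega>))"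
      by (rule nn_integral_distr[symmetric, OF Xm]) (use fm in simp)
    also have "\<dots> = (\<integral>\<^sup>+y. ennreal (f y) \<partial>(gaussian_iso v :: 'd measure))"
      using B_incr[of \<tau> s] False tau by (simp add: v_def)
    also have "\<dots> \<le> (\<integral>\<^sup>+y. ennreal A * ennreal (exp ((norm y)\<^sup>2 / 4)) \<partial>(gaussian_iso v :: 'd measure))"
      by (rule nn_integral_mono) (use fb A in \<open>simp add: ennreal_mult[symmetric]\<close>)
    also have "\<dots> = ennreal A * (\<integral>\<^sup>+y. ennreal (exp ((norm y)\<^sup>2 / 4)) \<partial>(gaussian_iso v :: 'd measure))"
      by (rule nn_integral_cmult) (simp add: gaussian_iso_def)
    also have "\<dots> \<le> ennreal A * ennreal (2 powr (real DIM('d) / 2))"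
      by (rule mult_left_mono[OF gauss_moment[OF v gauss_prob]]) (use v in auto)
    also have "\<dots> = ennreal (A * 2 powr (real DIM('d) / 2))" using A by (simp add: ennreal_mult)
    finally show ?thesis .
  qed
qed

definition AH where "AH = 2 * CV * exp (kV\<^sup>2) + 4 * S + 4 * K\<^sup>2 / c + 16 / (c * (r * g0)\<^sup>2)"

lemma AH_nonneg: "AH \<ge> 0"
  unfolding AH_def using CV_nonneg S_nonneg c_pos by (intro add_nonneg_nonneg) auto

lemma H_bound: "Hfun c K S r g0 V u \<le> AH * exp ((norm u)\<^sup>2 / 4)"
proof -
  define n where "n = norm u"
  define E where "E = exp (n\<^sup>2 / 4)"
  have E1: "E \<ge> 1" by (simp add: E_def)
  have nE: "n\<^sup>2 \<le> 4 * E"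
  proof -
    have "1 + n\<^sup>2 / 4 \<le> E" unfolding E_def by (rule exp_ge_add_one_self)
    thus ?thesis by linarith
  qed
  have Vb: "V u \<le> CV * exp (kV\<^sup>2) * E"
  proof -
    have "kV * n \<le> kV\<^sup>2 + n\<^sup>2 / 4"
    proof -
      have "0 \<le> (n / 2 - kV)\<^sup>2" by simp
      thus ?thesis by (simp add: power2_eq_square algebra_simps)
    qed
    hence "exp (kV * n) \<le> exp (kV\<^sup>2) * E" by (simp add: E_def exp_add[symmetric])
    hence "CV * exp (kV * n) \<le> CV * (exp (kV\<^sup>2) * E)" using CV_nonneg by (simp add: mult_left_mono)
    thus ?thesis using V_growth n_def by (metis mult.assoc order_trans)
  qed
  have rg: "r * g0 > 0" using r_pos g0_pos by simp
  have sq: "(K + n / (r * g0))\<^sup>2 \<le> 2 * K\<^sup>2 + 2 * n\<^sup>2 / (r * g0)\<^sup>2"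
  proof -
    define m where "m = n / (r * g0)"
    have "0 \<le> (K - m)\<^sup>2" by simp
    hence "(K + m)\<^sup>2 \<le> 2 * K\<^sup>2 + 2 * m\<^sup>2" by (simp add: power2_eq_square algebra_simps)
    moreover have "m\<^sup>2 = n\<^sup>2 / (r * g0)\<^sup>2" by (simp add: m_def power_divide)
    ultimately show ?thesis by (simp add: m_def)
  qed
  have "Hfun c K S r g0 V u = 2 * V u + 4 * S + 2 * (K + n / (r * g0))\<^sup>2 / c"
    by (simp add: Hfun_def n_def)
  also have "\<dots> \<le> 2 * (CV * exp (kV\<^sup>2) * E) + 4 * S + 2 * (2 * K\<^sup>2 + 2 * n\<^sup>2 / (r * g0)\<^sup>2) / c"
    using Vb sq c_pos by (intro add_mono divide_right_mono mult_left_mono) auto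
  also have "\<dots> = 2 * CV * exp (kV\<^sup>2) * E + 4 * S + 4 * K\<^sup>2 / c + 4 / (c * (r * g0)\<^sup>2) * n\<^sup>2"
    using c_pos rg by (simp add: field_simps)
  also have "\<dots> \<le> 2 * CV * exp (kV\<^sup>2) * E + 4 * S * E + 4 * K\<^sup>2 / c * E + 4 / (c * (r * g0)\<^sup>2) * (4 * E)"
  proof -
    have a: "4 * S \<le> 4 * S * E" using S_nonneg E1 by (simp add: mult_le_cancel_left1)
    have b: "4 * K\<^sup>2 / c \<le> 4 * K\<^sup>2 / c * E"
    proof -
      have "0 \<le> 4 * K\<^sup>2 / c" using c_pos by simp
      hence "4 * K\<^sup>2 / c * 1 \<le> 4 * K\<^sup>2 / c * E" by (rule mult_left_mono[OF E1])
      thus ?thesis by simp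
    qed
    have d: "4 / (c * (r * g0)\<^sup>2) * n\<^sup>2 \<le> 4 / (c * (r * g0)\<^sup>2) * (4 * E)"
      using nE c_pos rg by (intro mult_left_mono) auto
    show ?thesis using a b d by linarith
  qed
  also have "\<dots> = AH * exp ((norm u)\<^sup>2 / 4)" by (simp add: AH_def E_def n_def algebra_simps)
  finally show ?thesis .
qed

lemma H_meas: "(\<lambda>u. Hfun c K S r g0 V u) \<in> borel_measurable borel"
proof -
  have "continuous_on UNIV (\<lambda>u. Hfun c K S r g0 V u)"
    unfolding Hfun_def using V_cont r_pos g0_pos c_pos by (intro continuous_intros) auto
  thus ?thesis by (rule borel_measurable_continuous_onI)
qed

lemma H_nonneg: "Hfun c K S r g0 V u \<ge> 0"
  unfolding Hfun_def using V_nonneg S_nonneg c_pos by (intro add_nonneg_nonneg) auto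

definition G where "G t = integral {0..t} g"

lemma G_der_within: assumes "0 \<le> t" "t \<le> b" shows "(G has_real_derivative g t) (at t within {0..b})"
  unfolding G_def
  by (rule integral_has_real_derivative[OF continuous_on_subset[OF g_cont]]) (use assms in auto)

lemma G_der: assumes "0 < t" shows "(G has_real_derivative g t) (at t)"
proof -
  have "(G has_real_derivative g t) (at t within {0..t+1})" by (rule G_der_within) (use assms in auto)
  moreover have "at t within {0..t+1} = at t" using assms by (intro at_within_Icc_at) auto
  ultimately show ?thesis by simp
qed

lemma G_cont: "continuous_on {0..b} G"
  unfolding G_def
  by (rule indefinite_integral_continuous_1[OF integrable_continuous_real[OF continuous_on_subset[OF g_cont]]]) auto

lemma G_incr: assumes "0 \<le> \<tau>" "\<tau> \<le> T" shows "G T - G \<tau> \<ge> g0 * (T - \<tau>)"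
proof -
  have "(\<lambda>t. g0 * t - G t) T \<le> (\<lambda>t. g0 * t - G t) \<tau>"
  proof (rule DERIV_nonpos_imp_decreasing_open[OF assms(2)])
    fix x assume x: "\<tau> < x" "x < T"
    have "((\<lambda>t. g0 * t - G t) has_real_derivative g0 * 1 - g x) (at x)"
      using G_der[of x] x assms by (intro derivative_intros) auto
    moreover have "g0 * 1 - g x \<le> 0" using g_ge[of x] x assms by simp
    ultimately show "\<exists>y. ((\<lambda>t. g0 * t - G t) has_real_derivative y) (at x) \<and> y \<le> 0" by blast
  next
    show "continuous_on {\<tau>..T} (\<lambda>t. g0 * t - G t)"
      using continuous_on_subset[OF G_cont[of T]] assms by (intro continuous_intros) auto
  qed
  thus ?thesis by (simp add: algebra_simps)
qed

definition wgt where "wgt T s = exp (- (c / 2) * (G T - G s)) * g s"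

lemma w_integral:
  assumes "0 \<le> \<tau>" "\<tau> \<le> T"
  shows "(wgt T has_integral (2 / c) * (1 - exp (- (c / 2) * (G T - G \<tau>)))) {\<tau>..T}"
proof -
  define F where "F s = (2 / c) * exp (- (c / 2) * (G T - G s))" for s
  have "(wgt T has_integral (F T - F \<tau>)) {\<tau>..T}"
  proof (rule fundamental_theorem_of_calculus[OF assms(2)])
    fix x assume x: "x \<in> {\<tau>..T}"
    have "(G has_real_derivative g x) (at x within {\<tau>..T})"
      by (rule DERIV_subset[OF G_der_within[of x T]]) (use x assms in auto)
    hence "(F has_real_derivative (2 / c) * (exp (- (c / 2) * (G T - G x)) * (- (c / 2) * (0 - g x)))) (at x within {\<tau>..T})"
    proof -
      assume dG: "(G has_real_derivative g x) (at x within {\<tau>..T})"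
      have dd: "((\<lambda>s. - (c / 2) * (G T - G s)) has_real_derivative - (c / 2) * (0 - g x)) (at x within {\<tau>..T})"
        by (intro DERIV_cmult DERIV_diff DERIV_const dG)
      show ?thesis unfolding F_def by (intro DERIV_cmult DERIV_chain2[OF DERIV_exp dd])
    qed
    moreover have "(2 / c) * (exp (- (c / 2) * (G T - G x)) * (- (c / 2) * (0 - g x))) = wgt T x"
      using c_pos by (simp add: wgt_def field_simps)
    ultimately show "(F has_vector_derivative wgt T x) (at x within {\<tau>..T})"
      by (simp add: has_real_derivative_iff_has_vector_derivative)
  qed
  moreover have "F T - F \<tau> = (2 / c) * (1 - exp (- (c / 2) * (G T - G \<tau>)))"
    by (simp add: F_def algebra_simps)
  ultimately show ?thesis by simp
qed

lemma wgt_nonneg: assumes "s \<ge> 0" shows "wgt T s \<ge> 0"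
  unfolding wgt_def using g_pos assms by (simp add: less_imp_le)

lemma wgt_cont: "0 \<le> \<tau> \<Longrightarrow> continuous_on {\<tau>..T} (wgt T)"
  unfolding wgt_def
  using continuous_on_subset[OF G_cont[of T], of "{\<tau>..T}"] continuous_on_subset[OF g_cont, of "{\<tau>..T}"]
  by (intro continuous_intros) auto

end


lemma norm_sum_sq_eps:
  fixes a b :: "'d::real_inner"
  assumes e: "\<epsilon> > 0"
  shows "(norm (a + b))\<^sup>2 \<le> (1 + \<epsilon>) * (norm a)\<^sup>2 + (1 + 1 / \<epsilon>) * (norm b)\<^sup>2"
proof -
  have t: "(norm (a + b))\<^sup>2 \<le> (norm a + norm b)\<^sup>2"
    using norm_triangle_ineq[of a b] by (simp add: power_mono)
  have "2 * (norm a * norm b) \<le> \<epsilon> * (norm a)\<^sup>2 + (norm b)\<^sup>2 / \<epsilon>"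
  proof -
    have "0 \<le> (\<epsilon> * norm a - norm b)\<^sup>2 / \<epsilon>" using e by simp
    also have "\<dots> = \<epsilon> * (norm a)\<^sup>2 + (norm b)\<^sup>2 / \<epsilon> - 2 * (norm a * norm b)"
      using e by (simp add: power2_eq_square field_simps)
    finally show ?thesis by simp
  qed
  thus ?thesis using t by (simp add: power2_sum algebra_simps add_divide_distrib)
qed

context sde begin

lemma pathwise_omega:
  assumes tau: "0 \<le> \<tau>" "\<tau> \<le> T"
    and B0: "B 0 \<omega> = 0" and Bc: "continuous_on {0..} (\<lambda>t. B t \<omega>)"
    and Yc: "continuous_on {0..} (\<lambda>t. Y t \<omega>)"
    and Ys: "\<forall>t\<ge>0. Y t \<omega> = y0 + B t \<omega> - integral {0..t} (\<lambda>s. g s *\<^sub>R DV (Y s \<omega>) + (1 / (r + s)) *\<^sub>R Y s \<omega>)"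
  shows "(norm (Y T \<omega> - B T \<omega> + B \<tau> \<omega>))\<^sup>2 \<le> exp (- (c / 2) * (G T - G \<tau>)) * (norm (Y \<tau> \<omega>))\<^sup>2
      + integral {\<tau>..T} (\<lambda>s. exp (- (c / 2) * (G T - G s)) * g s * Hfun c K S r g0 V (B s \<omega> - B \<tau> \<omega>))"
proof -
  define F where "F s = g s *\<^sub>R DV (Y s \<omega>) + (1 / (r + s)) *\<^sub>R Y s \<omega>" for s
  define Z where "Z s = Y s \<omega> - B s \<omega> + B \<tau> \<omega>" for s
  define U where "U s = B s \<omega> - B \<tau> \<omega>" for s
  have ZU: "Z s + U s = Y s \<omega>" for s by (simp add: Z_def U_def)
  have Fc: "continuous_on {0..b} F" for b
    unfolding F_def using continuous_on_subset[OF g_cont] continuous_on_subset[OF Yc] r_pos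
    by (intro continuous_intros continuous_on_compose2[OF DV_cont, of _ "\<lambda>s. Y s \<omega>"]) auto
  have Zeq: "Z s = y0 + B \<tau> \<omega> - integral {0..s} F" if "s \<ge> 0" for s
    using Ys that by (simp add: Z_def F_def[abs_def])
  have Zder: "(Z has_vector_derivative - (g s *\<^sub>R DV (Z s + U s) + (1 / (r + s)) *\<^sub>R (Z s + U s))) (at s)"
    if s: "s \<in> {\<tau><..<T}" for s
  proof -
    have s0: "s > 0" using s tau by auto
    have "((\<lambda>u. integral {0..u} F) has_vector_derivative F s) (at s within {0..s+1})"
      by (rule integral_has_vector_derivative[OF Fc]) (use s0 in auto)
    moreover have "at s within {0..s+1} = at s" using s0 by (intro at_within_Icc_at) auto
    ultimately have "((\<lambda>u. integral {0..u} F) has_vector_derivative F s) (at s)" by simp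
    hence "((\<lambda>u. y0 + B \<tau> \<omega> - integral {0..u} F) has_vector_derivative 0 - F s) (at s)"
      by (rule has_vector_derivative_diff[OF has_vector_derivative_const])
    hence "((\<lambda>u. y0 + B \<tau> \<omega> - integral {0..u} F) has_vector_derivative - F s) (at s)" by simp
    hence "(Z has_vector_derivative - F s) (at s)"
      by (rule has_vector_derivative_transform_within_open[where S = "{0<..}"]) (use s0 Zeq in auto)
    thus ?thesis by (simp add: ZU F_def)
  qed
  have "(norm (Z T))\<^sup>2 \<le> exp (- (c / 2) * (G T - G \<tau>)) * (norm (Z \<tau>))\<^sup>2
      + integral {\<tau>..T} (\<lambda>s. exp (- (c / 2) * (G T - G s)) * g s * Hfun c K S r g0 V (U s))"
  proof (rule pathwise_bound[OF key c_pos K_nonneg r_pos g0_pos tau])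
    show "\<forall>s\<in>{\<tau>..T}. g0 \<le> g s" using g_ge tau by auto
    show "continuous_on {\<tau>..T} g" by (rule continuous_on_subset[OF g_cont]) (use tau in auto)
    show "\<forall>s\<in>{\<tau><..<T}. (G has_real_derivative g s) (at s)" using G_der tau by auto
    show "continuous_on {\<tau>..T} G" by (rule continuous_on_subset[OF G_cont[of T]]) (use tau in auto)
    show "continuous_on UNIV V" by (rule V_cont)
    show "continuous_on {\<tau>..T} U" unfolding U_def
      using continuous_on_subset[OF Bc, of "{\<tau>..T}"] tau by (intro continuous_intros) auto
    show "continuous_on {\<tau>..T} Z" unfolding Z_def
      using continuous_on_subset[OF Bc, of "{\<tau>..T}"] continuous_on_subset[OF Yc, of "{\<tau>..T}"] tau
      by (intro continuous_intros) auto
    show "\<forall>s\<in>{\<tau><..<T}. (Z has_vector_derivative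
          - (g s *\<^sub>R DV (Z s + U s) + (1 / (r + s)) *\<^sub>R (Z s + U s))) (at s)"
      using Zder by blast
  qed
  moreover have "Z \<tau> = Y \<tau> \<omega>" by (simp add: Z_def)
  ultimately show ?thesis by (simp add: U_def Z_def)
qed

end


context sde begin

lemma good_set:
  obtains N where "N \<in> sets M" "emeasure M N = 0"
    "\<forall>\<omega>\<in>space M - N. B 0 \<omega> = 0 \<and> continuous_on {0..} (\<lambda>t. B t \<omega>) \<and> continuous_on {0..} (\<lambda>t. Y t \<omega>) \<and>
        (\<forall>t\<ge>0. Y t \<omega> = y0 + B t \<omega>
            - integral {0..t} (\<lambda>s. g s *\<^sub>R DV (Y s \<omega>) + (1 / (r + s)) *\<^sub>R Y s \<omega>))"
proof -
  have "AE \<omega> in M. (B 0 \<omega> = 0 \<and> continuous_on {0..} (\<lambda>t. B t \<omega>)) \<and> (continuous_on {0..} (\<lambda>t. Y t \<omega>) \<and>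
        (\<forall>t\<ge>0. Y t \<omega> = y0 + B t \<omega>
            - integral {0..t} (\<lambda>s. g s *\<^sub>R DV (Y s \<omega>) + (1 / (r + s)) *\<^sub>R Y s \<omega>)))"
    using B_AE Y_sol by (rule AE_conjI)
  then obtain N where N: "{\<omega> \<in> space M. \<not> ((B 0 \<omega> = 0 \<and> continuous_on {0..} (\<lambda>t. B t \<omega>)) \<and> (continuous_on {0..} (\<lambda>t. Y t \<omega>) \<and>
        (\<forall>t\<ge>0. Y t \<omega> = y0 + B t \<omega>
            - integral {0..t} (\<lambda>s. g s *\<^sub>R DV (Y s \<omega>) + (1 / (r + s)) *\<^sub>R Y s \<omega>))))} \<subseteq> N"
    "emeasure M N = 0" "N \<in> sets M"
    by (rule AE_E)
  show ?thesis by (rule that[OF N(3) N(2)]) (use N(1) in blast)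
qed

lemma integral_term:
  assumes tau: "0 \<le> \<tau>" "\<tau> \<le> T" "T \<le> \<tau> + 1"
    and N: "N \<in> sets M" "emeasure M N = 0"
    and Nc: "\<forall>\<omega>\<in>space M - N. continuous_on {0..} (\<lambda>t. B t \<omega>)"
  defines "Bt \<equiv> \<lambda>t \<omega>. if \<omega> \<in> space M - N then B (max 0 t) \<omega> else 0"
  shows "(\<lambda>\<omega>. \<integral>\<^sup>+s. ennreal ((indicator {\<tau>..T} s *\<^sub>R wgt T s) * Hfun c K S r g0 V (Bt s \<omega> - Bt \<tau> \<omega>)) \<partial>lborel)
           \<in> borel_measurable M"
    and "(\<integral>\<^sup>+\<omega>. (\<integral>\<^sup>+s. ennreal ((indicator {\<tau>..T} s *\<^sub>R wgt T s) * Hfun c K S r g0 V (Bt s \<omega> - Bt \<tau> \<omega>)) \<partial>lborel) \<partial>M)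
      \<le> ennreal ((2 / c) * (AH * 2 powr (real DIM('d) / 2)))"
proof -
  interpret prob_space M by (rule prob)
  interpret P: pair_sigma_finite M lborel by standard
  let ?S = "{\<tau>..T}"
  define f where "f \<omega> s = ennreal ((indicator ?S s *\<^sub>R wgt T s) * Hfun c K S r g0 V (Bt s \<omega> - Bt \<tau> \<omega>))" for \<omega> s
  have Bt_meas: "Bt t \<in> borel_measurable M" for t
    unfolding Bt_def
  proof (rule measurable_If_set)
    show "B (max 0 t) \<in> borel_measurable M" by (rule B_meas) simp
    show "(\<lambda>\<omega>. 0) \<in> borel_measurable M" by simp
    show "(space M - N) \<inter> space M \<in> sets M" using N by auto
  qed
  have Bt_cont: "continuous_on UNIV (\<lambda>t. Bt t \<omega>)" for \<omega>
  proof (cases "\<omega> \<in> space M - N")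
    case True
    have "continuous_on UNIV (\<lambda>t. B (max 0 t) \<omega>)"
      by (rule continuous_on_compose2[OF Nc[rule_format, OF True]]) (auto intro!: continuous_intros)
    thus ?thesis using True by (simp add: Bt_def)
  next
    case False
    hence e: "(\<lambda>t. Bt t \<omega>) = (\<lambda>t. 0)" by (auto simp: Bt_def)
    show ?thesis unfolding e by (rule continuous_on_const)
  qed
  have joint: "(\<lambda>p. Bt (snd p) (fst p)) \<in> borel_measurable (M \<Otimes>\<^sub>M lborel)"
    by (rule cont_proc_measurable[OF Bt_meas Bt_cont])
  have wm: "(\<lambda>s. indicator ?S s *\<^sub>R wgt T s) \<in> borel_measurable borel"
    by (rule borel_measurable_continuous_on_indicator) (use wgt_cont tau in auto)
  have fm: "case_prod f \<in> borel_measurable (M \<Otimes>\<^sub>M lborel)"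
  proof -
    have a: "(\<lambda>p. indicator ?S (snd p) *\<^sub>R wgt T (snd p)) \<in> borel_measurable (M \<Otimes>\<^sub>M lborel)"
      by (rule measurable_compose[OF measurable_snd]) (use wm in simp)
    have b: "(\<lambda>p. Bt (snd p) (fst p) - Bt \<tau> (fst p)) \<in> borel_measurable (M \<Otimes>\<^sub>M lborel)"
      using joint measurable_compose[OF measurable_fst Bt_meas] by (rule borel_measurable_diff)
    have "(\<lambda>p. Hfun c K S r g0 V (Bt (snd p) (fst p) - Bt \<tau> (fst p))) \<in> borel_measurable (M \<Otimes>\<^sub>M lborel)"
      by (rule measurable_compose[OF b H_meas])
    with a show ?thesis unfolding f_def by (simp add: case_prod_beta' split_beta')
  qed
  show "(\<lambda>\<omega>. \<integral>\<^sup>+s. ennreal ((indicator {\<tau>..T} s *\<^sub>R wgt T s) * Hfun c K S r g0 V (Bt s \<omega> - Bt \<tau> \<omega>)) \<partial>lborel)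
           \<in> borel_measurable M"
    using lborel.borel_measurable_nn_integral[OF fm] by (simp add: f_def)
  have AEA: "AE \<omega> in M. \<omega> \<in> space M - N"
  proof -
    have "AE \<omega> in M. \<omega> \<notin> N" by (rule AE_not_in) (use N in auto)
    thus ?thesis by (auto elim!: AE_mp intro!: AE_I2)
  qed
  define C where "C = AH * 2 powr (real DIM('d) / 2)"
  have inner: "(\<integral>\<^sup>+\<omega>. f \<omega> s \<partial>M) \<le> ennreal (indicator ?S s *\<^sub>R wgt T s) * ennreal C" for s
  proof (cases "s \<in> ?S")
    case False thus ?thesis by (simp add: f_def)
  next
    case True
    have s0: "s \<ge> 0" using True tau by auto
    have wn: "wgt T s \<ge> 0" by (rule wgt_nonneg[OF s0])
    have "(\<integral>\<^sup>+\<omega>. f \<omega> s \<partial>M) = (\<integral>\<^sup>+\<omega>. ennreal (wgt T s) * ennreal (Hfun c K S r g0 V (B s \<omega> - B \<tau> \<omega>)) \<partial>M)"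
    proof (rule nn_integral_cong_AE)
      show "AE \<omega> in M. f \<omega> s = ennreal (wgt T s) * ennreal (Hfun c K S r g0 V (B s \<omega> - B \<tau> \<omega>))"
        using AEA
      proof (rule AE_mp, intro AE_I2 impI)
        fix \<omega> assume "\<omega> \<in> space M - N"
        thus "f \<omega> s = ennreal (wgt T s) * ennreal (Hfun c K S r g0 V (B s \<omega> - B \<tau> \<omega>))"
          using True s0 tau wn H_nonneg by (simp add: f_def Bt_def ennreal_mult)
      qed
    qed
    also have "\<dots> = ennreal (wgt T s) * (\<integral>\<^sup>+\<omega>. ennreal (Hfun c K S r g0 V (B s \<omega> - B \<tau> \<omega>)) \<partial>M)"
    proof (rule nn_integral_cmult)
      have [measurable]: "B s \<in> borel_measurable M" "B \<tau> \<in> borel_measurable M" using B_meas s0 tau by auto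
      have "(\<lambda>\<omega>. B s \<omega> - B \<tau> \<omega>) \<in> borel_measurable M" by measurable
      from measurable_compose[OF this H_meas]
      show "(\<lambda>\<omega>. ennreal (Hfun c K S r g0 V (B s \<omega> - B \<tau> \<omega>))) \<in> borel_measurable M" by simp
    qed
    also have "\<dots> \<le> ennreal (wgt T s) * ennreal C"
      unfolding C_def
      by (rule mult_left_mono[OF incr_moment[OF _ _ _ H_meas H_bound AH_nonneg]]) (use True tau in auto)
    finally show ?thesis using True by simp
  qed
  have "(\<integral>\<^sup>+\<omega>. (\<integral>\<^sup>+s. f \<omega> s \<partial>lborel) \<partial>M) = (\<integral>\<^sup>+s. (\<integral>\<^sup>+\<omega>. f \<omega> s \<partial>M) \<partial>lborel)"
    by (rule P.Fubini'[OF fm, symmetric])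
  also have "\<dots> \<le> (\<integral>\<^sup>+s. ennreal (indicator ?S s *\<^sub>R wgt T s) * ennreal C \<partial>lborel)"
    by (rule nn_integral_mono) (rule inner)
  also have "\<dots> = (\<integral>\<^sup>+s. ennreal (indicator ?S s *\<^sub>R wgt T s) \<partial>lborel) * ennreal C"
  proof (rule nn_integral_multc)
    have wm': "(\<lambda>s. indicator ?S s * wgt T s) \<in> borel_measurable borel" using wm by simp
    show "(\<lambda>s. ennreal (indicator ?S s *\<^sub>R wgt T s)) \<in> borel_measurable lborel"
      using measurable_compose[OF wm' measurable_ennreal] by simp
  qed
  also have "(\<integral>\<^sup>+s. ennreal (indicator ?S s *\<^sub>R wgt T s) \<partial>lborel) = (\<integral>\<^sup>+s. ennreal (wgt T s) * indicator ?S s \<partial>lborel)"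
    by (rule nn_integral_cong) (simp add: indicator_def)
  also have "(\<integral>\<^sup>+s. ennreal (wgt T s) * indicator ?S s \<partial>lborel) = ennreal ((2 / c) * (1 - exp (- (c / 2) * (G T - G \<tau>))))"
    by (rule nn_integral_has_integral_lebesgue'[OF _ w_integral[OF tau(1,2)]]) (use wgt_nonneg tau in auto)
  also have "ennreal ((2 / c) * (1 - exp (- (c / 2) * (G T - G \<tau>)))) * ennreal C \<le> ennreal (2 / c) * ennreal C"
  proof (rule mult_right_mono)
    have "g0 * (T - \<tau>) \<ge> 0" using g0_pos tau by simp
    hence "G T - G \<tau> \<ge> 0" using G_incr[OF tau(1,2)] by linarith
    have "exp (- (c / 2) * (G T - G \<tau>)) \<ge> 0" by simp
    thus "ennreal ((2 / c) * (1 - exp (- (c / 2) * (G T - G \<tau>)))) \<le> ennreal (2 / c)"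
    proof (intro ennreal_leI)
      assume e: "exp (- (c / 2) * (G T - G \<tau>)) \<ge> 0"
      have "(2 / c) * (1 - exp (- (c / 2) * (G T - G \<tau>))) \<le> (2 / c) * 1"
        using e c_pos by (intro mult_left_mono) auto
      thus "(2 / c) * (1 - exp (- (c / 2) * (G T - G \<tau>))) \<le> 2 / c" by simp
    qed
  qed simp
  also have "\<dots> = ennreal ((2 / c) * C)"
  proof -
    have C0: "C \<ge> 0" using AH_nonneg by (simp add: C_def)
    show ?thesis by (rule ennreal_mult[symmetric]) (use c_pos C0 in auto)
  qed
  finally show "(\<integral>\<^sup>+\<omega>. (\<integral>\<^sup>+s. ennreal ((indicator {\<tau>..T} s *\<^sub>R wgt T s) * Hfun c K S r g0 V (Bt s \<omega> - Bt \<tau> \<omega>)) \<partial>lborel) \<partial>M)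
      \<le> ennreal ((2 / c) * (AH * 2 powr (real DIM('d) / 2)))" by (simp add: f_def C_def)
qed

end


context sde begin

lemma H_cont_UNIV: "continuous_on UNIV (Hfun c K S r g0 V)"
  unfolding Hfun_def using V_cont r_pos g0_pos c_pos by (intro continuous_intros) auto

lemma step_bound:
  assumes tau: "0 \<le> \<tau>" "\<tau> \<le> T" "T \<le> \<tau> + 1" and e: "\<epsilon> > 0"
  shows "(\<integral>\<^sup>+\<omega>. ennreal ((norm (Y T \<omega>))\<^sup>2) \<partial>M)
    \<le> ennreal ((1 + \<epsilon>) * exp (- (c / 2) * (G T - G \<tau>))) * (\<integral>\<^sup>+\<omega>. ennreal ((norm (Y \<tau> \<omega>))\<^sup>2) \<partial>M)
      + ennreal ((1 + \<epsilon>) * ((2 / c) * (AH * 2 powr (real DIM('d) / 2))))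
      + ennreal ((1 + 1 / \<epsilon>) * (4 * 2 powr (real DIM('d) / 2)))"
proof -
  interpret prob_space M by (rule prob)
  obtain N where N: "N \<in> sets M" "emeasure M N = 0"
    and good: "\<forall>\<omega>\<in>space M - N. B 0 \<omega> = 0 \<and> continuous_on {0..} (\<lambda>t. B t \<omega>) \<and> continuous_on {0..} (\<lambda>t. Y t \<omega>) \<and>
        (\<forall>t\<ge>0. Y t \<omega> = y0 + B t \<omega>
            - integral {0..t} (\<lambda>s. g s *\<^sub>R DV (Y s \<omega>) + (1 / (r + s)) *\<^sub>R Y s \<omega>))"
    by (rule good_set)
  define Bt where "Bt = (\<lambda>t \<omega>. if \<omega> \<in> space M - N then B (max 0 t) \<omega> else 0)"
  let ?S = "{\<tau>..T}"
  define \<Phi> where "\<Phi> \<omega> = (\<integral>\<^sup>+s. ennreal ((indicator ?S s *\<^sub>R wgt T s) * Hfun c K S r g0 V (Bt s \<omega> - Bt \<tau> \<omega>)) \<partial>lborel)" for \<omega>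
  have Nc: "\<forall>\<omega>\<in>space M - N. continuous_on {0..} (\<lambda>t. B t \<omega>)" using good by blast
  have IT: "\<Phi> \<in> borel_measurable M"
    "(\<integral>\<^sup>+\<omega>. \<Phi> \<omega> \<partial>M) \<le> ennreal ((2 / c) * (AH * 2 powr (real DIM('d) / 2)))"
    using integral_term[OF tau N Nc] unfolding \<Phi>_def Bt_def by auto
  define \<rho> where "\<rho> = exp (- (c / 2) * (G T - G \<tau>))"
  have [measurable]: "B T \<in> borel_measurable M" "B \<tau> \<in> borel_measurable M"
    "Y T \<in> borel_measurable M" "Y \<tau> \<in> borel_measurable M"
    using B_meas Y_meas tau by auto
  have pw: "ennreal ((norm (Y T \<omega>))\<^sup>2) \<le> ennreal ((1 + \<epsilon>) * \<rho>) * ennreal ((norm (Y \<tau> \<omega>))\<^sup>2)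
      + ennreal (1 + \<epsilon>) * \<Phi> \<omega> + ennreal (1 + 1 / \<epsilon>) * ennreal ((norm (B T \<omega> - B \<tau> \<omega>))\<^sup>2)"
    if \<omega>: "\<omega> \<in> space M - N" for \<omega>
  proof -
    have gd: "B 0 \<omega> = 0" "continuous_on {0..} (\<lambda>t. B t \<omega>)" "continuous_on {0..} (\<lambda>t. Y t \<omega>)"
      "\<forall>t\<ge>0. Y t \<omega> = y0 + B t \<omega> - integral {0..t} (\<lambda>s. g s *\<^sub>R DV (Y s \<omega>) + (1 / (r + s)) *\<^sub>R Y s \<omega>)"
      using good \<omega> by auto
    define h where "h s = wgt T s * Hfun c K S r g0 V (B s \<omega> - B \<tau> \<omega>)" for s
    define I where "I = integral ?S h"
    have hc: "continuous_on ?S h"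
      unfolding h_def using wgt_cont[OF tau(1)] continuous_on_subset[OF gd(2), of ?S] tau
      by (intro continuous_intros continuous_on_compose2[OF H_cont_UNIV, of _ "\<lambda>s. B s \<omega> - B \<tau> \<omega>"]) auto
    have hn: "h s \<ge> 0" if "s \<in> ?S" for s
      unfolding h_def using wgt_nonneg[of s T] H_nonneg that tau by simp
    have hI: "(h has_integral I) ?S" unfolding I_def
      by (rule integrable_integral[OF integrable_continuous_real[OF hc]])
    have I0: "I \<ge> 0" by (rule has_integral_nonneg[OF hI hn])
    have PhiI: "\<Phi> \<omega> = ennreal I"
    proof -
      have "\<Phi> \<omega> = (\<integral>\<^sup>+s. ennreal (h s) * indicator ?S s \<partial>lborel)"
        unfolding \<Phi>_def
      proof (rule nn_integral_cong)
        fix s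
        show "ennreal ((indicator ?S s *\<^sub>R wgt T s) * Hfun c K S r g0 V (Bt s \<omega> - Bt \<tau> \<omega>))
            = ennreal (h s) * indicator ?S s"
          using \<omega> tau by (cases "s \<in> ?S") (auto simp: Bt_def h_def indicator_def)
      qed
      also have "\<dots> = ennreal I" by (rule nn_integral_has_integral_lebesgue'[OF hn hI])
      finally show ?thesis .
    qed
    have Ib: "(norm (Y T \<omega> - B T \<omega> + B \<tau> \<omega>))\<^sup>2 \<le> \<rho> * (norm (Y \<tau> \<omega>))\<^sup>2 + I"
      using pathwise_omega[OF tau(1,2) gd] unfolding \<rho>_def I_def h_def wgt_def by (simp add: mult.assoc)
    have "Y T \<omega> = (Y T \<omega> - B T \<omega> + B \<tau> \<omega>) + (B T \<omega> - B \<tau> \<omega>)" by simp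
    hence "(norm (Y T \<omega>))\<^sup>2 \<le> (1 + \<epsilon>) * (norm (Y T \<omega> - B T \<omega> + B \<tau> \<omega>))\<^sup>2 + (1 + 1 / \<epsilon>) * (norm (B T \<omega> - B \<tau> \<omega>))\<^sup>2"
      using norm_sum_sq_eps[OF e, of "Y T \<omega> - B T \<omega> + B \<tau> \<omega>" "B T \<omega> - B \<tau> \<omega>"] by simp
    also have "\<dots> \<le> (1 + \<epsilon>) * (\<rho> * (norm (Y \<tau> \<omega>))\<^sup>2 + I) + (1 + 1 / \<epsilon>) * (norm (B T \<omega> - B \<tau> \<omega>))\<^sup>2"
      using Ib e by (intro add_mono mult_left_mono) auto
    also have "\<dots> = ((1 + \<epsilon>) * \<rho>) * (norm (Y \<tau> \<omega>))\<^sup>2 + (1 + \<epsilon>) * I + (1 + 1 / \<epsilon>) * (norm (B T \<omega> - B \<tau> \<omega>))\<^sup>2"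
      by (simp add: algebra_simps)
    finally have real_ineq: "(norm (Y T \<omega>))\<^sup>2 \<le> ((1 + \<epsilon>) * \<rho>) * (norm (Y \<tau> \<omega>))\<^sup>2 + (1 + \<epsilon>) * I + (1 + 1 / \<epsilon>) * (norm (B T \<omega> - B \<tau> \<omega>))\<^sup>2" .
    have rho0: "\<rho> \<ge> 0" by (simp add: \<rho>_def)
    have "ennreal ((norm (Y T \<omega>))\<^sup>2) \<le> ennreal (((1 + \<epsilon>) * \<rho>) * (norm (Y \<tau> \<omega>))\<^sup>2 + (1 + \<epsilon>) * I + (1 + 1 / \<epsilon>) * (norm (B T \<omega> - B \<tau> \<omega>))\<^sup>2)"
      using real_ineq by (rule ennreal_leI)
    also have "\<dots> = ennreal ((1 + \<epsilon>) * \<rho>) * ennreal ((norm (Y \<tau> \<omega>))\<^sup>2) + ennreal (1 + \<epsilon>) * ennreal I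
        + ennreal (1 + 1 / \<epsilon>) * ennreal ((norm (B T \<omega> - B \<tau> \<omega>))\<^sup>2)"
      using e rho0 I0 by (simp add: ennreal_plus[symmetric] ennreal_mult[symmetric] del: ennreal_plus)
    finally show ?thesis by (simp add: PhiI)
  qed
  have AEA: "AE \<omega> in M. \<omega> \<in> space M - N"
  proof -
    have "AE \<omega> in M. \<omega> \<notin> N" by (rule AE_not_in) (use N in auto)
    thus ?thesis by (auto elim!: AE_mp intro!: AE_I2)
  qed
  have "(\<integral>\<^sup>+\<omega>. ennreal ((norm (Y T \<omega>))\<^sup>2) \<partial>M) \<le> (\<integral>\<^sup>+\<omega>. ennreal ((1 + \<epsilon>) * \<rho>) * ennreal ((norm (Y \<tau> \<omega>))\<^sup>2)
      + ennreal (1 + \<epsilon>) * \<Phi> \<omega> + ennreal (1 + 1 / \<epsilon>) * ennreal ((norm (B T \<omega> - B \<tau> \<omega>))\<^sup>2) \<partial>M)"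
  proof (rule nn_integral_mono_AE)
    show "AE \<omega> in M. ennreal ((norm (Y T \<omega>))\<^sup>2) \<le> ennreal ((1 + \<epsilon>) * \<rho>) * ennreal ((norm (Y \<tau> \<omega>))\<^sup>2)
      + ennreal (1 + \<epsilon>) * \<Phi> \<omega> + ennreal (1 + 1 / \<epsilon>) * ennreal ((norm (B T \<omega> - B \<tau> \<omega>))\<^sup>2)"
      using AEA
    proof (rule AE_mp, intro AE_I2 impI)
      fix \<omega> assume "\<omega> \<in> space M - N"
      thus "ennreal ((norm (Y T \<omega>))\<^sup>2) \<le> ennreal ((1 + \<epsilon>) * \<rho>) * ennreal ((norm (Y \<tau> \<omega>))\<^sup>2)
      + ennreal (1 + \<epsilon>) * \<Phi> \<omega> + ennreal (1 + 1 / \<epsilon>) * ennreal ((norm (B T \<omega> - B \<tau> \<omega>))\<^sup>2)" by (rule pw)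
    qed
  qed
  also have "\<dots> = ennreal ((1 + \<epsilon>) * \<rho>) * (\<integral>\<^sup>+\<omega>. ennreal ((norm (Y \<tau> \<omega>))\<^sup>2) \<partial>M)
      + ennreal (1 + \<epsilon>) * (\<integral>\<^sup>+\<omega>. \<Phi> \<omega> \<partial>M) + ennreal (1 + 1 / \<epsilon>) * (\<integral>\<^sup>+\<omega>. ennreal ((norm (B T \<omega> - B \<tau> \<omega>))\<^sup>2) \<partial>M)"
    using IT(1) by (simp add: nn_integral_add nn_integral_cmult)
  also have "\<dots> \<le> ennreal ((1 + \<epsilon>) * \<rho>) * (\<integral>\<^sup>+\<omega>. ennreal ((norm (Y \<tau> \<omega>))\<^sup>2) \<partial>M)
      + ennreal (1 + \<epsilon>) * ennreal ((2 / c) * (AH * 2 powr (real DIM('d) / 2)))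
      + ennreal (1 + 1 / \<epsilon>) * ennreal (4 * 2 powr (real DIM('d) / 2))"
  proof -
    have sq: "(\<integral>\<^sup>+\<omega>. ennreal ((norm (B T \<omega> - B \<tau> \<omega>))\<^sup>2) \<partial>M) \<le> ennreal (4 * 2 powr (real DIM('d) / 2))"
    proof (rule incr_moment[OF tau])
      show "(\<lambda>u::'d. (norm u)\<^sup>2) \<in> borel_measurable borel" by measurable
      fix u :: 'd
      have "1 + (norm u)\<^sup>2 / 4 \<le> exp ((norm u)\<^sup>2 / 4)" by (rule exp_ge_add_one_self)
      thus "(norm u)\<^sup>2 \<le> 4 * exp ((norm u)\<^sup>2 / 4)" by linarith
    qed simp
    show ?thesis using IT(2) sq by (intro add_mono mult_left_mono order_refl) auto
  qed
  also have "\<dots> = ennreal ((1 + \<epsilon>) * \<rho>) * (\<integral>\<^sup>+\<omega>. ennreal ((norm (Y \<tau> \<omega>))\<^sup>2) \<partial>M)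
      + ennreal ((1 + \<epsilon>) * ((2 / c) * (AH * 2 powr (real DIM('d) / 2))))
      + ennreal ((1 + 1 / \<epsilon>) * (4 * 2 powr (real DIM('d) / 2)))"
  proof -
    have p: "2 powr (real DIM('d) / 2) \<ge> 0" by simp
    have a: "ennreal (1 + \<epsilon>) * ennreal ((2 / c) * (AH * 2 powr (real DIM('d) / 2)))
        = ennreal ((1 + \<epsilon>) * ((2 / c) * (AH * 2 powr (real DIM('d) / 2))))"
      by (rule ennreal_mult[symmetric]) (use e c_pos AH_nonneg p in auto)
    have b: "ennreal (1 + 1 / \<epsilon>) * ennreal (4 * 2 powr (real DIM('d) / 2))
        = ennreal ((1 + 1 / \<epsilon>) * (4 * 2 powr (real DIM('d) / 2)))"
      by (rule ennreal_mult[symmetric]) (use e p in auto)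
    show ?thesis by (simp only: a b)
  qed
  finally show ?thesis by (simp add: \<rho>_def)
qed

end


context sde begin

lemma E0: "(\<integral>\<^sup>+\<omega>. ennreal ((norm (Y 0 \<omega>))\<^sup>2) \<partial>M) = ennreal ((norm y0)\<^sup>2)"
proof -
  interpret prob_space M by (rule prob)
  obtain N where N: "N \<in> sets M" "emeasure M N = 0"
    and good: "\<forall>\<omega>\<in>space M - N. B 0 \<omega> = 0 \<and> continuous_on {0..} (\<lambda>t. B t \<omega>) \<and> continuous_on {0..} (\<lambda>t. Y t \<omega>) \<and>
        (\<forall>t\<ge>0. Y t \<omega> = y0 + B t \<omega>
            - integral {0..t} (\<lambda>s. g s *\<^sub>R DV (Y s \<omega>) + (1 / (r + s)) *\<^sub>R Y s \<omega>))"
    by (rule good_set)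
  have AEA: "AE \<omega> in M. \<omega> \<notin> N" by (rule AE_not_in) (use N in auto)
  have "(\<integral>\<^sup>+\<omega>. ennreal ((norm (Y 0 \<omega>))\<^sup>2) \<partial>M) = (\<integral>\<^sup>+\<omega>. ennreal ((norm y0)\<^sup>2) \<partial>M)"
  proof (rule nn_integral_cong_AE)
    show "AE \<omega> in M. ennreal ((norm (Y 0 \<omega>))\<^sup>2) = ennreal ((norm y0)\<^sup>2)"
      using AEA
    proof (rule AE_mp, intro AE_I2 impI)
      fix \<omega> assume "\<omega> \<in> space M" "\<omega> \<notin> N"
      hence "B 0 \<omega> = 0 \<and> Y 0 \<omega> = y0 + B 0 \<omega> - integral {0..0} (\<lambda>s. g s *\<^sub>R DV (Y s \<omega>) + (1 / (r + s)) *\<^sub>R Y s \<omega>)"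
        using good by auto
      thus "ennreal ((norm (Y 0 \<omega>))\<^sup>2) = ennreal ((norm y0)\<^sup>2)" by simp
    qed
  qed
  also have "\<dots> = ennreal ((norm y0)\<^sup>2)" by (simp add: emeasure_space_1)
  finally show ?thesis .
qed

lemma bounded: "(SUP t\<in>{0..}. \<integral>\<^sup>+\<omega>. ennreal ((norm (Y t \<omega>))\<^sup>2) \<partial>M) < \<infinity>"
proof -
  define E where "E t = (\<integral>\<^sup>+\<omega>. ennreal ((norm (Y t \<omega>))\<^sup>2) \<partial>M)" for t
  define \<rho> where "\<rho> = exp (- (c / 2) * g0)"
  have \<rho>: "0 < \<rho>" "\<rho> < 1" using c_pos g0_pos by (auto simp: \<rho>_def)
  define \<epsilon> where "\<epsilon> = (1 - \<rho>) / (2 * \<rho>)"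
  have e: "\<epsilon> > 0" using \<rho> by (simp add: \<epsilon>_def)
  define q where "q = (1 + \<epsilon>) * \<rho>"
  have q: "q = (1 + \<rho>) / 2" using \<rho> by (simp add: q_def \<epsilon>_def field_simps)
  have q1: "q < 1" "q \<ge> 0" using \<rho> q by auto
  define C where "C = (1 + \<epsilon>) * ((2 / c) * (AH * 2 powr (real DIM('d) / 2))) + (1 + 1 / \<epsilon>) * (4 * 2 powr (real DIM('d) / 2))"
  have C0: "C \<ge> 0" unfolding C_def using e c_pos AH_nonneg by (intro add_nonneg_nonneg mult_nonneg_nonneg) auto
  define D where "D = max ((1 + \<epsilon>) * (norm y0)\<^sup>2 + C) (C / (1 - q))"
  have D1: "(1 + \<epsilon>) * (norm y0)\<^sup>2 + C \<le> D" by (simp add: D_def)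
  have D2: "q * D + C \<le> D"
  proof -
    have "C / (1 - q) \<le> D" by (simp add: D_def)
    hence "C \<le> (1 - q) * D" using q1 by (simp add: divide_le_eq mult.commute)
    thus ?thesis by (simp add: algebra_simps)
  qed
  have D0: "D \<ge> 0" using D1 e C0 by (smt (verit) zero_le_power2 mult_nonneg_nonneg)
  have step: "E t \<le> ennreal ((1 + \<epsilon>) * exp (- (c / 2) * (G t - G \<tau>))) * E \<tau> + ennreal C"
    if "0 \<le> \<tau>" "\<tau> \<le> t" "t \<le> \<tau> + 1" for \<tau> t
  proof -
    have h1: "E t \<le> ennreal ((1 + \<epsilon>) * exp (- (c / 2) * (G t - G \<tau>))) * E \<tau>
      + ennreal ((1 + \<epsilon>) * ((2 / c) * (AH * 2 powr (real DIM('d) / 2))))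
      + ennreal ((1 + 1 / \<epsilon>) * (4 * 2 powr (real DIM('d) / 2)))"
      unfolding E_def by (rule step_bound[OF that e])
    have XY: "ennreal ((1 + \<epsilon>) * ((2 / c) * (AH * 2 powr (real DIM('d) / 2))))
      + ennreal ((1 + 1 / \<epsilon>) * (4 * 2 powr (real DIM('d) / 2))) = ennreal C"
      unfolding C_def using e c_pos AH_nonneg by (subst ennreal_plus) (auto intro!: mult_nonneg_nonneg)
    show ?thesis using h1 XY by (metis add.assoc)
  qed
  have bound: "\<forall>t\<in>{0..real n}. E t \<le> ennreal D" for n :: nat
  proof (induction n)
    case 0
    have "E 0 = ennreal ((norm y0)\<^sup>2)" unfolding E_def by (rule E0)
    also have "\<dots> \<le> ennreal D"
    proof (rule ennreal_leI)
      have "(norm y0)\<^sup>2 \<le> (1 + \<epsilon>) * (norm y0)\<^sup>2" using e by (simp add: mult_le_cancel_right1)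
      thus "(norm y0)\<^sup>2 \<le> D" using D1 C0 by linarith
    qed
    finally show ?case by simp
  next
    case (Suc n)
    show ?case
    proof
      fix t assume t: "t \<in> {0..real (Suc n)}"
      show "E t \<le> ennreal D"
      proof (cases "t \<le> 1")
        case True
        have "E t \<le> ennreal ((1 + \<epsilon>) * exp (- (c / 2) * (G t - G 0))) * E 0 + ennreal C"
          by (rule step) (use t True in auto)
        also have "\<dots> \<le> ennreal (1 + \<epsilon>) * ennreal ((norm y0)\<^sup>2) + ennreal C"
        proof -
          have "G t - G 0 \<ge> g0 * (t - 0)" by (rule G_incr) (use t in auto)
          moreover have "g0 * (t - 0) \<ge> 0" using g0_pos t by simp
          ultimately have "exp (- (c / 2) * (G t - G 0)) \<le> 1" using c_pos by simp
          hence "(1 + \<epsilon>) * exp (- (c / 2) * (G t - G 0)) \<le> 1 + \<epsilon>" using e by (simp add: mult_le_cancel_left1)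
          hence "ennreal ((1 + \<epsilon>) * exp (- (c / 2) * (G t - G 0))) \<le> ennreal (1 + \<epsilon>)" by (rule ennreal_leI)
          thus ?thesis unfolding E_def E0 by (intro add_mono mult_right_mono) auto
        qed
        also have "\<dots> = ennreal ((1 + \<epsilon>) * (norm y0)\<^sup>2 + C)"
          using e C0 by (simp add: ennreal_mult ennreal_plus)
        also have "\<dots> \<le> ennreal D" using D1 by (rule ennreal_leI)
        finally show ?thesis .
      next
        case False
        define \<tau> where "\<tau> = t - 1"
        have tau: "0 \<le> \<tau>" "\<tau> \<le> t" "t \<le> \<tau> + 1" using False by (auto simp: \<tau>_def)
        have taun: "\<tau> \<in> {0..real n}" using t tau by (auto simp: \<tau>_def)
        have "E t \<le> ennreal ((1 + \<epsilon>) * exp (- (c / 2) * (G t - G \<tau>))) * E \<tau> + ennreal C"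
          by (rule step[OF tau])
        also have "\<dots> \<le> ennreal q * ennreal D + ennreal C"
        proof -
          have "G t - G \<tau> \<ge> g0 * (t - \<tau>)" by (rule G_incr) (use tau in auto)
          hence "G t - G \<tau> \<ge> g0" by (simp add: \<tau>_def)
          hence "exp (- (c / 2) * (G t - G \<tau>)) \<le> \<rho>" unfolding \<rho>_def using c_pos by simp
          hence "(1 + \<epsilon>) * exp (- (c / 2) * (G t - G \<tau>)) \<le> q" unfolding q_def using e by simp
          hence a: "ennreal ((1 + \<epsilon>) * exp (- (c / 2) * (G t - G \<tau>))) \<le> ennreal q" by (rule ennreal_leI)
          have b: "E \<tau> \<le> ennreal D" using Suc.IH taun by blast
          show ?thesis by (intro add_mono mult_mono a b) auto
        qed
        also have "\<dots> = ennreal (q * D + C)" using q1 D0 C0 by (simp add: ennreal_mult ennreal_plus)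
        also have "\<dots> \<le> ennreal D" using D2 by (rule ennreal_leI)
        finally show ?thesis .
      qed
    qed
  qed
  have "(SUP t\<in>{0..}. E t) \<le> ennreal D"
  proof (rule SUP_least)
    fix t :: real assume "t \<in> {0..}"
    hence "t \<in> {0..real (nat \<lceil>t\<rceil>)}" by (auto simp: real_nat_ceiling_ge)
    thus "E t \<le> ennreal D" using bound by blast
  qed
  also have "\<dots> < \<infinity>" by simp
  finally show ?thesis by (simp add: E_def)
qed

end


theorem mainTheorem16:
  fixes M :: "'a measure" and B :: "real \<Rightarrow> 'a \<Rightarrow> 'd::euclidean_space"
    and V W chi :: "'d \<Rightarrow> real" and DV DW Dchi :: "'d \<Rightarrow> 'd"
    and D2V D2W :: "'d \<Rightarrow> ('d \<Rightarrow>\<^sub>L 'd)"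
    and c a r :: real and g g' :: "real \<Rightarrow> real"
    and x :: 'd and \<mu> :: "'d measure" and Y :: "real \<Rightarrow> 'a \<Rightarrow> 'd"
  assumes BM: "std_brownian_motion M B"
    (* V is C^2, nonnegative *)
    and V_nonneg: "\<forall>y. V y \<ge> 0"
    and V_grad: "\<forall>y. (V has_derivative (\<lambda>h. DV y \<bullet> h)) (at y)"
    and V_hess: "\<forall>y. (DV has_derivative blinfun_apply (D2V y)) (at y)"
    and V_hess_cont: "continuous_on UNIV D2V"
    (* decomposition V = W + chi *)
    and V_decomp: "\<forall>y. V y = W y + chi y"
    and W_grad: "\<forall>y. (W has_derivative (\<lambda>h. DW y \<bullet> h)) (at y)"
    and W_hess: "\<forall>y. (DW has_derivative blinfun_apply (D2W y)) (at y)"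
    and c_pos: "c > 0"
    and W_convex: "\<forall>y h. c * (norm h)\<^sup>2 \<le> h \<bullet> blinfun_apply (D2W y) h"
    and chi_grad: "\<forall>y. (chi has_derivative (\<lambda>h. Dchi y \<bullet> h)) (at y)"
    and chi_supp: "compact (closure {y. chi y \<noteq> 0})"
    and chi_lip: "\<exists>L. \<forall>y z. norm (Dchi y - Dchi z) \<le> L * dist y z"
    (* growth conditions *)
    and a_pos: "a > 0"
    and lap_bound: "\<forall>y. laplacian_of (D2V y) \<le> a * (1 + V y)"
    and grad_growth: "filterlim (\<lambda>y. (norm (DV y))\<^sup>2 / V y) at_top at_infinity"
    (* critical points *)
    and crit_finite: "finite {y. DV y = 0}"
    and min_nondeg: "\<forall>y. DV y = 0 \<and> is_local_min V y \<longrightarrow>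
                        (\<forall>h. h \<noteq> 0 \<longrightarrow> h \<bullet> blinfun_apply (D2V y) h > 0)"
    and saddle_neg: "\<forall>y. DV y = 0 \<and> \<not> is_local_min V y \<longrightarrow>
                        (\<exists>ev v. ev < 0 \<and> v \<noteq> 0 \<and> blinfun_apply (D2V y) v = ev *\<^sub>R v)"
    (* g: C^1, positive, nondecreasing *)
    and g_deriv: "\<forall>t\<ge>0. (g has_real_derivative g' t) (at t within {0..})"
    and g'_cont: "continuous_on {0..} g'"
    and g_pos: "\<forall>t\<ge>0. g t > 0"
    and g_mono: "mono_on {0..} g"
    and g_lim: "filterlim g at_top at_top"
    and g_ratio: "((\<lambda>t. g' t / (g t)\<^sup>2) \<longlongrightarrow> 0) at_top"
    (* parameters *)
    and r_pos: "r > 0"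
    and mu_prob: "prob_space \<mu>" and mu_sets: "sets \<mu> = sets borel"
    and mu_mean: "integrable \<mu> (\<lambda>z. z)"
    (* Y solves the SDE (additive noise, integral form) *)
    and Y_meas: "\<forall>t\<ge>0. Y t \<in> borel_measurable M"
    and Y_sol: "AE \<omega> in M. continuous_on {0..} (\<lambda>t. Y t \<omega>) \<and>
        (\<forall>t\<ge>0. Y t \<omega> = (x - (\<integral>z. z \<partial>\<mu>)) + B t \<omega>
            - integral {0..t} (\<lambda>s. g s *\<^sub>R DV (Y s \<omega>) + (1 / (r + s)) *\<^sub>R Y s \<omega>))"
  shows "(SUP t\<in>{0..}. \<integral>\<^sup>+ \<omega>. ennreal ((norm (Y t \<omega>))\<^sup>2) \<partial>M) < \<infinity>"
proof -
  obtain L where L: "\<forall>y z. norm (Dchi y - Dchi z) \<le> L * dist y z" using chi_lip by blast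
  define L' where "L' = max L 0"
  have L': "\<forall>y z. norm (Dchi y - Dchi z) \<le> L' * dist y z"
  proof (intro allI)
    fix y z :: 'd
    have "L * dist y z \<le> L' * dist y z" unfolding L'_def by (intro mult_right_mono) auto
    thus "norm (Dchi y - Dchi z) \<le> L' * dist y z" using L by (meson order_trans)
  qed
  have L'0: "L' \<ge> 0" by (simp add: L'_def)
  interpret P: potential V W chi DV DW Dchi D2V D2W c a L'
    by (unfold_locales) (use V_nonneg V_grad V_hess V_decomp W_grad W_hess c_pos W_convex chi_grad chi_supp L' L'0 a_pos lap_bound in auto)
  obtain S K where SK: "S \<ge> 0" "K \<ge> 0"
    "\<forall>y u. (y - u) \<bullet> DV y \<ge> c / 2 * (norm (y - u))\<^sup>2 - K * norm (y - u) - V u - 2 * S"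
    using P.key_ineq by blast
  obtain CV kV where CK: "CV \<ge> 0" "kV \<ge> 0" "\<forall>y. V y \<le> CV * exp (kV * norm y)"
    using P.growth by blast
  have V_cont: "continuous_on UNIV V"
    using V_grad has_derivative_continuous by (metis continuous_at_imp_continuous_on)
  have DV_cont: "continuous_on UNIV DV"
    using V_hess has_derivative_continuous by (metis continuous_at_imp_continuous_on)
  have g_cont: "continuous_on {0..} g"
  proof -
    have "continuous (at t within {0..}) g" if "t \<in> {0..}" for t
      using g_deriv that by (auto intro: DERIV_continuous)
    thus ?thesis by (simp add: continuous_on_eq_continuous_within)
  qed
  interpret Q: sde M B Y V DV g r c K S CV kV "x - (\<integral>z. z \<partial>\<mu>)"
    by (unfold_locales) (use BM SK c_pos V_nonneg V_cont DV_cont CK g_cont g_pos g_mono r_pos Y_meas Y_sol in auto)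
  show ?thesis by (rule Q.bounded)
qed


end
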